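(* The set $\mathfrak F_+$ of all filtering symmetric linear operators on $\mathfrak g$ with nonnegative spectrum and trace $1$ is a compact semialgebraic subset of the space of linear operators on $\mathfrak g$.
   Context: $\mathfrak g$ is the Lie algebra of a compact Lie group, with a Euclidean inner product $Q$ satisfying $Q([X,Y],Z)=Q(X,[Y,Z])$ for all $X,Y,Z$. A linear operator $A$ on $\mathfrak g$ is symmetric if $Q(AX,Y)=Q(X,AY)$ for all $X,Y$. For a symmetric $A$ and $a\in\mathbb R$ let $F_a$ be the span of all eigenvectors of $A$ with eigenvalue $\le a$. A symmetric $A$ is filtering if $[F_a,F_b]\subseteq F_{a+b}$ for all $a,b\in\mathbb R$. *)

theory Defs
  imports "HOL-Analysis.Analysis"
begin

text \<open>The Lie algebra g is modelled as real^'n (dimension CARD('n)) with a bracket br.\<close>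

definition lie_algebra :: "(real^'n \<Rightarrow> real^'n \<Rightarrow> real^'n) \<Rightarrow> bool" where
  "lie_algebra br \<longleftrightarrow> bilinear br \<and> (\<forall>x. br x x = 0) \<and>
     (\<forall>x y z. br x (br y z) + br y (br z x) + br z (br x y) = 0)"

definition invariant_inner_product ::
  "(real^'n \<Rightarrow> real^'n \<Rightarrow> real) \<Rightarrow> (real^'n \<Rightarrow> real^'n \<Rightarrow> real^'n) \<Rightarrow> bool" where
  "invariant_inner_product Q br \<longleftrightarrow> bilinear Q \<and> (\<forall>x y. Q x y = Q y x) \<and>
     (\<forall>x. x \<noteq> 0 \<longrightarrow> Q x x > 0) \<and> (\<forall>X Y Z. Q (br X Y) Z = Q X (br Y Z))"

definition symmetric_op :: "(real^'n \<Rightarrow> real^'n \<Rightarrow> real) \<Rightarrow> real^'n^'n \<Rightarrow> bool" where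
  "symmetric_op Q A \<longleftrightarrow> (\<forall>x y. Q (A *v x) y = Q x (A *v y))"

definition filt_space :: "real^'n^'n \<Rightarrow> real \<Rightarrow> (real^'n) set" where
  "filt_space A a = span {v. v \<noteq> 0 \<and> (\<exists>c. c \<le> a \<and> A *v v = c *\<^sub>R v)}"

definition filtering ::
  "(real^'n \<Rightarrow> real^'n \<Rightarrow> real) \<Rightarrow> (real^'n \<Rightarrow> real^'n \<Rightarrow> real^'n) \<Rightarrow> real^'n^'n \<Rightarrow> bool" where
  "filtering Q br A \<longleftrightarrow> symmetric_op Q A \<and>
     (\<forall>a b. span {br x y | x y. x \<in> filt_space A a \<and> y \<in> filt_space A b} \<subseteq> filt_space A (a + b))"

definition nonneg_spectrum :: "real^'n^'n \<Rightarrow> bool" where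
  "nonneg_spectrum A \<longleftrightarrow> (\<forall>c v. v \<noteq> 0 \<and> A *v v = c *\<^sub>R v \<longrightarrow> c \<ge> 0)"

definition F_plus ::
  "(real^'n \<Rightarrow> real^'n \<Rightarrow> real) \<Rightarrow> (real^'n \<Rightarrow> real^'n \<Rightarrow> real^'n) \<Rightarrow> (real^'n^'n) set" where
  "F_plus Q br = {A. filtering Q br A \<and> nonneg_spectrum A \<and> trace A = 1}"

inductive poly_fun :: "('a::euclidean_space \<Rightarrow> real) \<Rightarrow> bool" where
  poly_const: "poly_fun (\<lambda>x. c)"
| poly_coord: "b \<in> Basis \<Longrightarrow> poly_fun (\<lambda>x. x \<bullet> b)"
| poly_add: "poly_fun p \<Longrightarrow> poly_fun q \<Longrightarrow> poly_fun (\<lambda>x. p x + q x)"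
| poly_mult: "poly_fun p \<Longrightarrow> poly_fun q \<Longrightarrow> poly_fun (\<lambda>x. p x * q x)"

inductive semialgebraic :: "('a::euclidean_space) set \<Rightarrow> bool" where
  sa_zero: "poly_fun p \<Longrightarrow> semialgebraic {x. p x = 0}"
| sa_pos: "poly_fun p \<Longrightarrow> semialgebraic {x. p x > 0}"
| sa_union: "semialgebraic S \<Longrightarrow> semialgebraic T \<Longrightarrow> semialgebraic (S \<union> T)"
| sa_compl: "semialgebraic S \<Longrightarrow> semialgebraic (- S)"

end

theory Submission
  imports Defs "HOL-Computational_Algebra.Polynomial"
begin

lemma poly_fun_cmult: "poly_fun p \<Longrightarrow> poly_fun (\<lambda>x. c * p x)"
  by (rule poly_mult[OF poly_const])

lemma poly_fun_minus: "poly_fun p \<Longrightarrow> poly_fun (\<lambda>x. - p x)"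
  using poly_fun_cmult[of p "-1"] by simp

lemma poly_fun_diff: "poly_fun p \<Longrightarrow> poly_fun q \<Longrightarrow> poly_fun (\<lambda>x. p x - q x)"
  using poly_add[OF _ poly_fun_minus, of p q] by simp

lemma poly_fun_sum: "finite S \<Longrightarrow> (\<And>i. i \<in> S \<Longrightarrow> poly_fun (f i)) \<Longrightarrow> poly_fun (\<lambda>x. \<Sum>i\<in>S. f i x)"
proof (induction S rule: finite_induct)
  case empty then show ?case using poly_const[of 0] by simp
next
  case (insert a F) then show ?case by (simp add: poly_add)
qed

lemma poly_fun_prod: "finite S \<Longrightarrow> (\<And>i. i \<in> S \<Longrightarrow> poly_fun (f i)) \<Longrightarrow> poly_fun (\<lambda>x. \<Prod>i\<in>S. f i x)"
proof (induction S rule: finite_induct)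
  case empty then show ?case using poly_const[of 1] by simp
next
  case (insert a F) then show ?case by (simp add: poly_mult)
qed

lemma poly_fun_pow: "poly_fun p \<Longrightarrow> poly_fun (\<lambda>x. p x ^ k)"
  by (induction k) (auto intro: poly_mult poly_const)

lemma poly_fun_entry: "poly_fun (\<lambda>A::real^'n^'m. A$i$j)"
proof -
  have "axis i (axis j 1) \<in> (Basis :: (real^'n^'m) set)"
    by (auto simp: Basis_vec_def)
  from poly_coord[OF this] show ?thesis
    by (simp add: inner_axis)
qed

lemma poly_fun_continuous: "poly_fun p \<Longrightarrow> continuous_on UNIV p"
  by (induction rule: poly_fun.induct) (auto intro!: continuous_intros)

lemma sa_UNIV: "semialgebraic UNIV"
  using sa_zero[OF poly_const[of 0]] by simp

lemma sa_empty: "semialgebraic {}"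
  using sa_compl[OF sa_UNIV] by simp

lemma sa_inter: "semialgebraic S \<Longrightarrow> semialgebraic T \<Longrightarrow> semialgebraic (S \<inter> T)"
proof -
  assume "semialgebraic S" "semialgebraic T"
  then have "semialgebraic (- (- S \<union> - T))" by (intro sa_compl sa_union)
  then show ?thesis by simp
qed

lemma sa_Inter: "finite I \<Longrightarrow> (\<And>i. i \<in> I \<Longrightarrow> semialgebraic (S i)) \<Longrightarrow> semialgebraic (\<Inter>i\<in>I. S i)"
proof (induction I rule: finite_induct)
  case empty then show ?case by (simp add: sa_UNIV)
next
  case (insert a F) then show ?case by (simp add: sa_inter)
qed

lemma sa_ge: "poly_fun p \<Longrightarrow> semialgebraic {x. p x \<ge> 0}"
proof -
  assume "poly_fun p"
  then have "semialgebraic (- {x. - p x > 0})" by (intro sa_compl sa_pos poly_fun_minus)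
  moreover have "- {x. - p x > 0} = {x. p x \<ge> 0}" by auto
  ultimately show ?thesis by simp
qed

lemma sa_eq: "poly_fun p \<Longrightarrow> poly_fun q \<Longrightarrow> semialgebraic {x. p x = q x}"
  using sa_zero[OF poly_fun_diff, of p q] by simp


locale qip =
  fixes Q :: "real^'n \<Rightarrow> real^'n \<Rightarrow> real"
  assumes bil: "bilinear Q" and symQ: "\<And>x y. Q x y = Q y x" and posQ: "\<And>x. x \<noteq> 0 \<Longrightarrow> Q x x > 0"
begin

lemma linL: "linear (\<lambda>x. Q x y)" using bil unfolding bilinear_def by blast
lemma linR: "linear (\<lambda>y. Q x y)" using bil unfolding bilinear_def by blast

lemma addL: "Q (x + y) z = Q x z + Q y z" using linear_add[OF linL] by blast
lemma addR: "Q z (x + y) = Q z x + Q z y" using linear_add[OF linR] by blast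
lemma diffL: "Q (x - y) z = Q x z - Q y z" using linear_diff[OF linL] by blast
lemma diffR: "Q z (x - y) = Q z x - Q z y" using linear_diff[OF linR] by blast
lemma scaleL: "Q (c *\<^sub>R x) z = c * Q x z" using linear_scale[OF linL] by (simp)
lemma scaleR': "Q z (c *\<^sub>R x) = c * Q z x" using linear_scale[OF linR] by (simp)
lemma zeroL[simp]: "Q 0 z = 0" using linear_0[OF linL] by blast
lemma zeroR[simp]: "Q z 0 = 0" using linear_0[OF linR] by blast
lemma sumL: "Q (\<Sum>i\<in>S. f i) z = (\<Sum>i\<in>S. Q (f i) z)" using linear_sum[OF linL] by blast
lemma sumR: "Q z (\<Sum>i\<in>S. f i) = (\<Sum>i\<in>S. Q z (f i))" using linear_sum[OF linR] by blast

lemma Q_nonneg: "Q x x \<ge> 0"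
  by (cases "x = 0") (auto dest: posQ intro: less_imp_le)

lemma Q_zero_iff: "Q x x = 0 \<longleftrightarrow> x = 0"
  using posQ by force

lemma bbil: "bounded_bilinear Q"
  using bil bilinear_conv_bounded_bilinear by blast

lemma contQ: "continuous_on S (\<lambda>x. Q (f x) (g x))" if "continuous_on S f" "continuous_on S g"
  using bounded_bilinear.continuous_on[OF bbil that] .

lemma coercive: "\<exists>c>0. \<forall>x. c * (norm x)^2 \<le> Q x x"
proof -
  let ?S = "sphere (0::real^'n) 1"
  have cS: "compact ?S" and nS: "?S \<noteq> {}" by simp_all
  have ct: "continuous_on ?S (\<lambda>x. Q x x)" by (rule contQ[OF continuous_on_id continuous_on_id])
  obtain x0 where x0: "x0 \<in> ?S" "\<And>x. x \<in> ?S \<Longrightarrow> Q x0 x0 \<le> Q x x"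
    using continuous_attains_inf[OF cS nS ct] by blast
  have "x0 \<noteq> 0" using x0 by auto
  then have c: "Q x0 x0 > 0" by (rule posQ)
  show ?thesis
  proof (intro exI[of _ "Q x0 x0"] conjI allI c)
    fix x :: "real^'n"
    show "Q x0 x0 * (norm x)^2 \<le> Q x x"
    proof (cases "x = 0")
      case True then show ?thesis by simp
    next
      case False
      define s where "s = inverse (norm x)"
      have nx: "norm x > 0" using False by simp
      have "norm (s *\<^sub>R x) = 1" unfolding s_def using nx by simp
      then have "s *\<^sub>R x \<in> ?S" by simp
      then have "Q x0 x0 \<le> Q (s *\<^sub>R x) (s *\<^sub>R x)" by (rule x0)
      also have "\<dots> = s * s * Q x x" by (simp add: scaleL scaleR')
      finally have "Q x0 x0 \<le> s * s * Q x x" .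
      then have "Q x0 x0 * (norm x * norm x) \<le> (s * norm x) * (s * norm x) * Q x x"
        using nx by (simp add: mult_right_mono mult.commute mult.left_commute)
      moreover have "s * norm x = 1" unfolding s_def using nx by simp
      ultimately show ?thesis by (simp add: power2_eq_square)
    qed
  qed
qed

lemma quad_lemma: fixes a b :: real assumes "\<And>t. a * t + b * t^2 \<le> 0" shows "a = 0"
proof (rule ccontr)
  assume "a \<noteq> 0"
  define d where "d = \<bar>b\<bar> + 1"
  have d: "d > 0" "\<bar>b\<bar> = d - 1" unfolding d_def by auto
  define t where "t = a / d"
  have e1: "a * t + b * t^2 = a^2/d + b * a^2 / d^2"
    unfolding t_def using d(1) by (simp add: power2_eq_square field_simps)
  have "- \<bar>b\<bar> \<le> b" by simp
  from mult_right_mono[OF this zero_le_power2[of a]] have "- \<bar>b\<bar> * a^2 \<le> b * a^2" .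
  from divide_right_mono[OF this zero_le_power2[of d]]
  have e2: "- \<bar>b\<bar> * a^2 / d^2 \<le> b * a^2 / d^2" .
  have e3: "a^2/d - (d - 1) * a^2 / d^2 = a^2 / d^2" using d(1) by (simp add: power2_eq_square field_simps)
  have e4: "a^2 / d^2 > 0" using \<open>a \<noteq> 0\<close> d(1) by simp
  have e5: "- \<bar>b\<bar> * a^2 / d^2 = - ((d - 1) * a^2 / d^2)" unfolding d(2) by (simp only: minus_mult_left minus_divide_left)
  have "a * t + b * t^2 > 0" using e1 e2 e3 e4 e5 by linarith
  then show False using assms[of t] by simp
qed

lemma expand: "Q (a + s *\<^sub>R b) (c + t *\<^sub>R d) = Q a c + t * Q a d + s * Q b c + s * t * Q b d"
  by (simp add: addL addR scaleL scaleR' algebra_simps)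

lemma inv_sqrt_sq: fixes q :: real shows "q > 0 \<Longrightarrow> inverse (sqrt q) * (inverse (sqrt q) * q) = 1"
proof -
  assume q: "q > 0"
  have "sqrt q * sqrt q = q" using q by simp
  moreover have "sqrt q > 0" using q by simp
  ultimately have "inverse (sqrt q) * inverse (sqrt q) = inverse q" by (simp add: inverse_mult_distrib[symmetric])
  then have "inverse (sqrt q) * (inverse (sqrt q) * q) = inverse q * q" by (simp add: mult.assoc[symmetric])
  then show ?thesis using q by simp
qed

lemma inv_sqrt_sq2: fixes q :: real shows "q > 0 \<Longrightarrow> inverse (sqrt q) * inverse (sqrt q) = inverse q"
proof -
  assume q: "q > 0"
  have "sqrt q * sqrt q = q" using q by simp
  then show ?thesis by (simp add: inverse_mult_distrib[symmetric])
qed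

lemma eigen_exists:
  assumes sym: "symmetric_op Q A" and W: "subspace W" and inv: "\<And>x. x \<in> W \<Longrightarrow> A *v x \<in> W"
    and nz: "W \<noteq> {0}"
  shows "\<exists>x\<in>W. Q x x = 1 \<and> A *v x = Q (A *v x) x *\<^sub>R x"
proof -
  obtain c where c: "c > 0" "\<And>x. c * (norm x)^2 \<le> Q x x" using coercive by blast
  define K where "K = W \<inter> {x. Q x x = 1}"
  have "closed W" using W by (rule closed_subspace)
  moreover have "closed {x. Q x x = 1}"
    using continuous_closed_preimage_constant[of UNIV "\<lambda>x. Q x x" 1]
    using contQ[OF continuous_on_id continuous_on_id] by simp
  ultimately have cK: "closed K" unfolding K_def by auto
  have "K \<subseteq> cball 0 (sqrt (1/c))"
  proof
    fix x assume "x \<in> K"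
    then have "c * (norm x)^2 \<le> 1" using c(2)[of x] unfolding K_def by auto
    then have "(norm x)^2 \<le> 1/c" using c(1) by (simp add: field_simps)
    then show "x \<in> cball 0 (sqrt (1/c))" by (simp add: real_le_rsqrt)
  qed
  then have "bounded K" using bounded_cball bounded_subset by blast
  with cK have compK: "compact K" by (simp add: compact_eq_bounded_closed)
  obtain y0 where y0: "y0 \<in> W" "y0 \<noteq> 0" using nz W subspace_0 by blast
  define z0 where "z0 = inverse (sqrt (Q y0 y0)) *\<^sub>R y0"
  have "Q y0 y0 > 0" using posQ y0 by auto
  then have "Q z0 z0 = 1" unfolding z0_def by (simp add: scaleL scaleR' inv_sqrt_sq)
  moreover have "z0 \<in> W" unfolding z0_def using y0 W subspace_scale by blast
  ultimately have neK: "K \<noteq> {}" unfolding K_def by auto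
  moreover have ctK: "continuous_on K (\<lambda>x. Q (A *v x) x)"
    by (rule contQ[OF linear_continuous_on[OF matrix_vector_mul_bounded_linear] continuous_on_id])
  obtain x0 where x0: "x0 \<in> K" "\<And>x. x \<in> K \<Longrightarrow> Q (A *v x) x \<le> Q (A *v x0) x0"
    using continuous_attains_sup[OF compK neK ctK] by blast
  define l where "l = Q (A *v x0) x0"
  have x0W: "x0 \<in> W" and x01: "Q x0 x0 = 1" using x0 unfolding K_def by auto
  have ineq: "Q (A *v z) z \<le> l * Q z z" if "z \<in> W" for z
  proof (cases "z = 0")
    case True then show ?thesis by simp
  next
    case False
    then have qz: "Q z z > 0" by (rule posQ)
    define s where "s = inverse (sqrt (Q z z))"
    have "s *\<^sub>R z \<in> K" unfolding K_def s_def using that W subspace_scale qz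
      by (auto simp: scaleL scaleR' inv_sqrt_sq)
    from x0(2)[OF this] have "s * s * Q (A *v z) z \<le> l"
      by (simp add: l_def scaleL scaleR' matrix_vector_mult_scaleR mult.assoc)
    moreover have "s * s = inverse (Q z z)" unfolding s_def
      by (rule inv_sqrt_sq2[OF qz])
    ultimately show ?thesis using qz by (simp add: field_simps)
  qed
  have orth: "Q (A *v x0 - l *\<^sub>R x0) y = 0" if yW: "y \<in> W" for y
  proof -
    have "(2 * (Q (A *v x0) y - l * Q x0 y)) * t + (Q (A *v y) y - l * Q y y) * t^2 \<le> 0" for t
    proof -
      have "x0 + t *\<^sub>R y \<in> W" using x0W yW W by (simp add: subspace_add subspace_scale)
      from ineq[OF this] have "Q (A *v (x0 + t *\<^sub>R y)) (x0 + t *\<^sub>R y) \<le> l * Q (x0 + t *\<^sub>R y) (x0 + t *\<^sub>R y)" .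
      moreover have sy: "Q (A *v y) x0 = Q (A *v x0) y"
      proof -
        have "Q (A *v y) x0 = Q y (A *v x0)" using sym unfolding symmetric_op_def by blast
        also have "\<dots> = Q (A *v x0) y" by (rule symQ)
        finally show ?thesis .
      qed
      moreover have "A *v (x0 + t *\<^sub>R y) = A *v x0 + t *\<^sub>R (A *v y)"
        by (simp add: matrix_vector_right_distrib matrix_vector_mult_scaleR)
      ultimately have "Q (A *v x0) x0 + t * Q (A *v x0) y + t * Q (A *v y) x0 + t * t * Q (A *v y) y
          \<le> l * (Q x0 x0 + t * Q x0 y + t * Q y x0 + t * t * Q y y)"
        by (simp add: expand)
      then have "l + 2 * t * Q (A *v x0) y + t * t * Q (A *v y) y \<le> l * (1 + 2 * t * Q x0 y + t * t * Q y y)"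
        using sy x01 symQ[of y x0] unfolding l_def by (simp add: algebra_simps)
      moreover have "(2 * (Q (A *v x0) y - l * Q x0 y)) * t + (Q (A *v y) y - l * Q y y) * t^2
         = (l + 2 * t * Q (A *v x0) y + t * t * Q (A *v y) y) - l * (1 + 2 * t * Q x0 y + t * t * Q y y)"
        by (simp add: algebra_simps power2_eq_square)
      ultimately show ?thesis by linarith
    qed
    from quad_lemma[OF this] show ?thesis by (simp add: diffL scaleL)
  qed
  have "A *v x0 - l *\<^sub>R x0 \<in> W" using x0W inv W by (simp add: subspace_diff subspace_scale)
  from orth[OF this] have "A *v x0 - l *\<^sub>R x0 = 0" by (simp add: Q_zero_iff)
  then show ?thesis using x0W x01 by (auto simp: l_def)
qed

end

context qip begin

lemma subspace_orth: "subspace {x. \<forall>v\<in>S. Q v x = 0}"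
  unfolding subspace_def by (auto simp: addR scaleR')

lemma Q_span_zero: assumes "x \<in> span S" "\<And>w. w \<in> S \<Longrightarrow> Q a w = 0" shows "Q a x = 0"
proof -
  have "subspace {x. Q a x = 0}" using subspace_orth[of "{a}"] by simp
  then show ?thesis using span_induct[OF assms(1), of "\<lambda>x. Q a x = 0"] assms(2) by blast
qed

definition oe :: "real^'n^'n \<Rightarrow> (real^'n) set \<Rightarrow> bool" where
  "oe A S \<longleftrightarrow> finite S \<and> (\<forall>v\<in>S. Q v v = 1 \<and> (\<exists>c. A *v v = c *\<^sub>R v)) \<and> (\<forall>v\<in>S. \<forall>w\<in>S. v \<noteq> w \<longrightarrow> Q v w = 0)"

lemma on_indep: assumes "\<And>v. v \<in> S \<Longrightarrow> Q v v = 1" "\<And>v w. v \<in> S \<Longrightarrow> w \<in> S \<Longrightarrow> v \<noteq> w \<Longrightarrow> Q v w = 0"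
  shows "independent S"
proof
  assume "dependent S"
  then obtain a where a: "a \<in> S" "a \<in> span (S - {a})" unfolding dependent_def by blast
  have "Q a a = 0" using Q_span_zero[OF a(2)] assms(2) a(1) by blast
  then show False using assms(1)[OF a(1)] by simp
qed

lemma dimn: "dim (UNIV :: (real^'n) set) = CARD('n)"
  by simp

lemma oe_step: assumes sym: "symmetric_op Q A" and S: "oe A S" and card: "card S < CARD('n)"
  shows "\<exists>e. e \<notin> S \<and> oe A (insert e S)"
proof -
  have fS: "finite S" using S unfolding oe_def by blast
  have S1: "\<And>v. v \<in> S \<Longrightarrow> Q v v = 1" and S0: "\<And>v w. v \<in> S \<Longrightarrow> w \<in> S \<Longrightarrow> v \<noteq> w \<Longrightarrow> Q v w = 0"
    using S unfolding oe_def by blast+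
  have "\<not> UNIV \<subseteq> span S"
  proof
    assume "UNIV \<subseteq> span S"
    from dim_le_card[OF this fS] card show False by simp
  qed
  then obtain x where x: "x \<notin> span S" by blast
  define x' where "x' = x - (\<Sum>v\<in>S. Q v x *\<^sub>R v)"
  have orth: "Q u x' = 0" if u: "u \<in> S" for u
  proof -
    have "(\<Sum>v\<in>S. Q u (Q v x *\<^sub>R v)) = (\<Sum>v\<in>S. if v = u then Q u x else 0)"
    proof (rule sum.cong[OF refl])
      fix v assume v: "v \<in> S"
      show "Q u (Q v x *\<^sub>R v) = (if v = u then Q u x else 0)"
        using S1[OF u] S0[OF u v] by (auto simp: scaleR')
    qed
    also have "\<dots> = Q u x" using u fS by simp
    finally show ?thesis unfolding x'_def by (simp add: diffR sumR)
  qed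
  have "x' \<noteq> 0"
  proof
    assume "x' = 0"
    then have "x = (\<Sum>v\<in>S. Q v x *\<^sub>R v)" unfolding x'_def by simp
    also have "\<dots> \<in> span S" by (intro span_sum span_scale span_base)
    finally show False using x by simp
  qed
  define W where "W = {x. \<forall>v\<in>S. Q v x = 0}"
  have W: "subspace W" unfolding W_def by (rule subspace_orth)
  have inv: "A *v z \<in> W" if "z \<in> W" for z
  proof -
    have "Q v (A *v z) = 0" if v: "v \<in> S" for v
    proof -
      obtain c where c: "A *v v = c *\<^sub>R v" using S v unfolding oe_def by blast
      have "Q v (A *v z) = Q (A *v v) z" using sym unfolding symmetric_op_def by simp
      also have "\<dots> = c * Q v z" using c by (simp add: scaleL)
      also have "\<dots> = 0" using \<open>z \<in> W\<close> v unfolding W_def by simp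
      finally show ?thesis .
    qed
    then show ?thesis unfolding W_def by blast
  qed
  have "x' \<in> W" unfolding W_def using orth by blast
  then have nz: "W \<noteq> {0}" using \<open>x' \<noteq> 0\<close> by blast
  obtain e where e: "e \<in> W" "Q e e = 1" "A *v e = Q (A *v e) e *\<^sub>R e"
    using eigen_exists[OF sym W inv nz] by blast
  have eS: "e \<notin> S"
  proof
    assume "e \<in> S"
    then have "Q e e = 0" using e(1) unfolding W_def by blast
    then show False using e(2) by simp
  qed
  have f2: "\<forall>v\<in>insert e S. Q v v = 1 \<and> (\<exists>c. A *v v = c *\<^sub>R v)"
  proof
    fix v assume "v \<in> insert e S"
    then consider "v = e" | "v \<in> S" by blast
    then show "Q v v = 1 \<and> (\<exists>c. A *v v = c *\<^sub>R v)"
    proof cases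
      case 1 then show ?thesis using e(2,3) by blast
    next
      case 2 then show ?thesis using S unfolding oe_def by blast
    qed
  qed
  have f3: "\<forall>v\<in>insert e S. \<forall>w\<in>insert e S. v \<noteq> w \<longrightarrow> Q v w = 0"
  proof (intro ballI impI)
    fix v w assume v: "v \<in> insert e S" and w: "w \<in> insert e S" and vw: "v \<noteq> w"
    show "Q v w = 0"
    proof (cases "v = e")
      case True
      then have "w \<in> S" using w vw by simp
      then have "Q w e = 0" using e(1) unfolding W_def by blast
      then show ?thesis using True symQ[of e w] by simp
    next
      case False
      then have vS: "v \<in> S" using v by simp
      show ?thesis
      proof (cases "w = e")
        case True then show ?thesis using vS e(1) unfolding W_def by blast
      next
        case False then show ?thesis using vS w vw S0 by simp
      qed
    qed
  qed
  have "oe A (insert e S)" unfolding oe_def using fS f2 f3 by blast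
  then show ?thesis using eS by blast
qed

lemma oe_exists: assumes sym: "symmetric_op Q A"
  shows "k \<le> CARD('n) \<Longrightarrow> \<exists>S. oe A S \<and> card S = k"
proof (induction k)
  case 0 then show ?case by (intro exI[of _ "{}"]) (simp add: oe_def)
next
  case (Suc k)
  then obtain S where S: "oe A S" "card S = k" by auto
  then obtain e where "e \<notin> S" "oe A (insert e S)" using oe_step[OF sym S(1)] Suc.prems by auto
  then show ?case using S unfolding oe_def by (intro exI[of _ "insert e S"]) auto
qed

definition ON :: "('n \<Rightarrow> real^'n) \<Rightarrow> bool" where
  "ON v \<longleftrightarrow> (\<forall>i j. Q (v i) (v j) = (if i = j then 1 else 0))"

lemma spectral: assumes sym: "symmetric_op Q A"
  shows "\<exists>v. ON v \<and> (\<forall>i. A *v v i = Q (A *v v i) (v i) *\<^sub>R v i)"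
proof -
  obtain S where S: "oe A S" "card S = CARD('n)" using oe_exists[OF sym] by blast
  have fS: "finite S" using S unfolding oe_def by blast
  obtain h where h: "bij_betw h (UNIV :: 'n set) S"
    using finite_same_card_bij[of "UNIV :: 'n set" S] fS S(2) by auto
  have hS: "h i \<in> S" for i using h bij_betwE by blast
  have inj: "h i = h j \<Longrightarrow> i = j" for i j using h unfolding bij_betw_def inj_on_def by blast
  have on: "ON h" unfolding ON_def
  proof (intro allI)
    fix i j show "Q (h i) (h j) = (if i = j then 1 else 0)"
      using S(1) hS[of i] hS[of j] inj[of i j] unfolding oe_def by auto
  qed
  have ev: "A *v h i = Q (A *v h i) (h i) *\<^sub>R h i" for i
  proof -
    obtain c where c: "A *v h i = c *\<^sub>R h i" using S(1) hS[of i] unfolding oe_def by blast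
    have "Q (h i) (h i) = 1" using S(1) hS[of i] unfolding oe_def by blast
    then have "Q (A *v h i) (h i) = c" using c by (simp add: scaleL)
    then show ?thesis using c by simp
  qed
  show ?thesis using on ev by blast
qed

lemma ON_inj: "ON v \<Longrightarrow> inj v"
  unfolding ON_def inj_def by (metis one_neq_zero)

lemma ON_span: assumes "ON v" shows "span (range v) = UNIV"
proof -
  have ind: "independent (range v)"
    by (rule on_indep) (use assms in \<open>auto simp: ON_def\<close>)
  have "card (range v) = CARD('n)" using ON_inj[OF assms] by (simp add: card_image)
  then have "UNIV \<subseteq> span (range v)"
    using card_ge_dim_independent[of "range v" UNIV] ind by simp
  then show ?thesis by blast
qed

lemma ON_expand: assumes "ON v" shows "x = (\<Sum>i\<in>UNIV. Q (v i) x *\<^sub>R v i)"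
proof -
  have "x \<in> span (range v)" using ON_span[OF assms] by simp
  then obtain c where c: "x = (\<Sum>w\<in>range v. c w *\<^sub>R w)" using span_finite[of "range v"] by auto
  also have "\<dots> = (\<Sum>i\<in>UNIV. c (v i) *\<^sub>R v i)"
    using sum.reindex[OF ON_inj[OF assms], of "\<lambda>w. c w *\<^sub>R w"] by simp
  finally have x: "x = (\<Sum>i\<in>UNIV. c (v i) *\<^sub>R v i)" .
  have "Q (v j) x = c (v j)" for j
  proof -
    have "Q (v j) x = (\<Sum>i\<in>UNIV. c (v i) * Q (v j) (v i))"
      by (subst x) (simp add: sumR scaleR')
    also have "\<dots> = (\<Sum>i\<in>UNIV. if i = j then c (v j) else 0)"
      using assms unfolding ON_def by (intro sum.cong) auto
    also have "\<dots> = c (v j)" by simp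
    finally show ?thesis .
  qed
  then show ?thesis using x by simp
qed

end

locale eig = qip Q for Q :: "real^'n \<Rightarrow> real^'n \<Rightarrow> real" +
  fixes A :: "real^'n^'n" and v :: "'n \<Rightarrow> real^'n" and lam :: "'n \<Rightarrow> real"
  assumes symA: "symmetric_op Q A" and on: "ON v" and ev: "\<And>i. A *v v i = lam i *\<^sub>R v i"
begin

lemma mv_sum: "(M::real^'n^'n) *v (\<Sum>i\<in>S. f i) = (\<Sum>i\<in>S. M *v f i)"
  by (induction S rule: infinite_finite_induct) (simp_all add: matrix_vector_right_distrib)

lemma Qvv: "Q (v i) (v j) = (if i = j then 1 else 0)" using on unfolding ON_def by blast

lemma expand_v: "x = (\<Sum>i\<in>UNIV. Q (v i) x *\<^sub>R v i)" using ON_expand[OF on] .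

lemma v_nz: "v i \<noteq> 0" using Qvv[of i i] by auto

lemma coord_ev: assumes "A *v w = c *\<^sub>R w" "Q (v i) w \<noteq> 0" shows "lam i = c"
proof -
  have "c * Q (v i) w = Q (v i) (A *v w)" using assms(1) by (simp add: scaleR')
  also have "\<dots> = Q (A *v v i) w" using symA unfolding symmetric_op_def by simp
  also have "\<dots> = lam i * Q (v i) w" by (simp add: ev scaleL)
  finally show ?thesis using assms(2) by simp
qed

lemma span_coord: "x \<in> span (v ` {i. lam i \<le> a}) \<longleftrightarrow> (\<forall>i. lam i > a \<longrightarrow> Q (v i) x = 0)"
proof
  assume x: "x \<in> span (v ` {i. lam i \<le> a})"
  show "\<forall>i. lam i > a \<longrightarrow> Q (v i) x = 0"
  proof (intro allI impI)
    fix i assume "lam i > a"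
    then show "Q (v i) x = 0"
      by (intro Q_span_zero[OF x]) (auto simp: Qvv)
  qed
next
  assume h: "\<forall>i. lam i > a \<longrightarrow> Q (v i) x = 0"
  have "x = (\<Sum>i\<in>UNIV. Q (v i) x *\<^sub>R v i)" by (rule expand_v)
  also have "\<dots> \<in> span (v ` {i. lam i \<le> a})"
  proof (intro span_sum)
    fix i :: 'n
    show "Q (v i) x *\<^sub>R v i \<in> span (v ` {i. lam i \<le> a})"
    proof (cases "lam i \<le> a")
      case True then show ?thesis by (intro span_scale span_base) auto
    next
      case False then show ?thesis using h by (simp add: span_zero)
    qed
  qed
  finally show "x \<in> span (v ` {i. lam i \<le> a})" .
qed

lemma filt_char: "filt_space A a = span (v ` {i. lam i \<le> a})"
proof
  show "filt_space A a \<subseteq> span (v ` {i. lam i \<le> a})"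
    unfolding filt_space_def
  proof (rule span_minimal)
    show "{w. w \<noteq> 0 \<and> (\<exists>c\<le>a. A *v w = c *\<^sub>R w)} \<subseteq> span (v ` {i. lam i \<le> a})"
    proof
      fix w assume "w \<in> {w. w \<noteq> 0 \<and> (\<exists>c\<le>a. A *v w = c *\<^sub>R w)}"
      then obtain c where c: "c \<le> a" "A *v w = c *\<^sub>R w" by blast
      show "w \<in> span (v ` {i. lam i \<le> a})" unfolding span_coord
        using coord_ev[OF c(2)] c(1) by force
    qed
  qed simp
next
  show "span (v ` {i. lam i \<le> a}) \<subseteq> filt_space A a"
    unfolding filt_space_def
    by (rule span_mono) (use ev v_nz in auto)
qed

lemma br_expand: assumes "bilinear br"
  shows "br x y = (\<Sum>i\<in>UNIV. \<Sum>j\<in>UNIV. (Q (v i) x * Q (v j) y) *\<^sub>R br (v i) (v j))"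
proof -
  have "br x y = br (\<Sum>i\<in>UNIV. Q (v i) x *\<^sub>R v i) (\<Sum>j\<in>UNIV. Q (v j) y *\<^sub>R v j)"
    using expand_v[of x] expand_v[of y] by simp
  also have "\<dots> = (\<Sum>(i,j)\<in>UNIV \<times> UNIV. br (Q (v i) x *\<^sub>R v i) (Q (v j) y *\<^sub>R v j))"
    by (rule bilinear_sum[OF assms])
  also have "\<dots> = (\<Sum>(i,j)\<in>UNIV \<times> UNIV. (Q (v i) x * Q (v j) y) *\<^sub>R br (v i) (v j))"
    by (simp add: bilinear_lmul[OF assms] bilinear_rmul[OF assms] mult.commute)
  also have "\<dots> = (\<Sum>i\<in>UNIV. \<Sum>j\<in>UNIV. (Q (v i) x * Q (v j) y) *\<^sub>R br (v i) (v j))"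
    by (simp add: sum.cartesian_product)
  finally show ?thesis .
qed

lemma filtering_char: assumes br: "bilinear br"
  shows "filtering Q br A \<longleftrightarrow> (\<forall>i j k. lam k > lam i + lam j \<longrightarrow> Q (br (v i) (v j)) (v k) = 0)"
proof
  assume "filtering Q br A"
  then have f: "span {br x y | x y. x \<in> filt_space A a \<and> y \<in> filt_space A b} \<subseteq> filt_space A (a + b)" for a b
    unfolding filtering_def by blast
  show "\<forall>i j k. lam k > lam i + lam j \<longrightarrow> Q (br (v i) (v j)) (v k) = 0"
  proof (intro allI impI)
    fix i j k assume lk: "lam k > lam i + lam j"
    have "v i \<in> filt_space A (lam i)" "v j \<in> filt_space A (lam j)"
      unfolding filt_char by (auto intro: span_base)
    then have "br (v i) (v j) \<in> span {br x y | x y. x \<in> filt_space A (lam i) \<and> y \<in> filt_space A (lam j)}"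
      by (intro span_base) blast
    with f have "br (v i) (v j) \<in> filt_space A (lam i + lam j)" by blast
    then have "Q (v k) (br (v i) (v j)) = 0" unfolding filt_char span_coord using lk by blast
    then show "Q (br (v i) (v j)) (v k) = 0" by (simp add: symQ)
  qed
next
  assume h: "\<forall>i j k. lam k > lam i + lam j \<longrightarrow> Q (br (v i) (v j)) (v k) = 0"
  show "filtering Q br A" unfolding filtering_def
  proof (intro conjI symA allI)
    fix a b
    show "span {br x y | x y. x \<in> filt_space A a \<and> y \<in> filt_space A b} \<subseteq> filt_space A (a + b)"
    proof (rule span_minimal)
      show "subspace (filt_space A (a + b))" unfolding filt_space_def by simp
      show "{br x y | x y. x \<in> filt_space A a \<and> y \<in> filt_space A b} \<subseteq> filt_space A (a + b)"
      proof
        fix z assume "z \<in> {br x y | x y. x \<in> filt_space A a \<and> y \<in> filt_space A b}"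
        then obtain x y where z: "z = br x y" and x: "x \<in> filt_space A a" and y: "y \<in> filt_space A b" by blast
        have x0: "lam i > a \<Longrightarrow> Q (v i) x = 0" for i using x unfolding filt_char span_coord by blast
        have y0: "lam j > b \<Longrightarrow> Q (v j) y = 0" for j using y unfolding filt_char span_coord by blast
        show "z \<in> filt_space A (a + b)" unfolding filt_char span_coord
        proof (intro allI impI)
          fix k assume lk: "lam k > a + b"
          have "Q (v k) z = (\<Sum>i\<in>UNIV. \<Sum>j\<in>UNIV. (Q (v i) x * Q (v j) y) * Q (v k) (br (v i) (v j)))"
            unfolding z by (subst br_expand[OF br]) (simp add: sumR scaleR')
          also have "\<dots> = 0"
          proof (intro sum.neutral ballI)
            fix i j :: 'n
            show "(Q (v i) x * Q (v j) y) * Q (v k) (br (v i) (v j)) = 0"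
            proof (cases "lam i > a \<or> lam j > b")
              case True then show ?thesis using x0 y0 by auto
            next
              case False
              then have "lam k > lam i + lam j" using lk by linarith
              then have "Q (br (v i) (v j)) (v k) = 0" using h by blast
              then show ?thesis by (simp add: symQ)
            qed
          qed
          finally show "Q (v k) z = 0" .
        qed
      qed
    qed
  qed
qed

lemma nonneg_char: "nonneg_spectrum A \<longleftrightarrow> (\<forall>i. lam i \<ge> 0)"
proof
  assume "nonneg_spectrum A"
  then show "\<forall>i. lam i \<ge> 0" unfolding nonneg_spectrum_def using ev v_nz by blast
next
  assume h: "\<forall>i. lam i \<ge> 0"
  show "nonneg_spectrum A" unfolding nonneg_spectrum_def
  proof (intro allI impI)
    fix c w assume cw: "w \<noteq> 0 \<and> A *v w = c *\<^sub>R w"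
    have "\<exists>i. Q (v i) w \<noteq> 0"
    proof (rule ccontr)
      assume "\<not> (\<exists>i. Q (v i) w \<noteq> 0)"
      then have "w = 0" using expand_v[of w] by simp
      then show False using cw by simp
    qed
    then obtain i where "Q (v i) w \<noteq> 0" by blast
    then have "lam i = c" using coord_ev cw by blast
    then show "c \<ge> 0" using h by auto
  qed
qed

lemma trace_eq: "trace A = (\<Sum>i\<in>UNIV. lam i)"
proof -
  have col: "A $ p $ p = (\<Sum>i\<in>UNIV. Q (v i) (A *v axis p 1) * (v i $ p))" for p
  proof -
    have "A $ p $ p = (A *v axis p 1) $ p" by (simp add: matrix_vector_mult_def axis_def if_distrib cong: if_cong)
    also have "\<dots> = (\<Sum>i\<in>UNIV. Q (v i) (A *v axis p 1) *\<^sub>R v i) $ p" using expand_v by metis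
    also have "\<dots> = (\<Sum>i\<in>UNIV. Q (v i) (A *v axis p 1) * (v i $ p))" by (simp add: sum_component)
    finally show ?thesis .
  qed
  have "trace A = (\<Sum>p\<in>UNIV. \<Sum>i\<in>UNIV. Q (v i) (A *v axis p 1) * (v i $ p))"
    unfolding trace_def using col by simp
  also have "\<dots> = (\<Sum>i\<in>UNIV. \<Sum>p\<in>UNIV. Q (v i) (A *v ((v i $ p) *\<^sub>R axis p 1)))"
    by (subst sum.swap) (simp add: matrix_vector_mult_scaleR scaleR' mult.commute)
  also have "\<dots> = (\<Sum>i\<in>UNIV. Q (v i) (A *v v i))"
  proof (rule sum.cong[OF refl])
    fix i
    have "(\<Sum>p\<in>UNIV. Q (v i) (A *v ((v i $ p) *\<^sub>R axis p 1))) = Q (v i) (A *v (\<Sum>p\<in>UNIV. (v i $ p) *\<^sub>R axis p 1))"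
      by (simp add: sumR mv_sum)
    also have "(\<Sum>p\<in>UNIV. (v i $ p) *\<^sub>R axis p 1) = v i"
      using basis_expansion[of "v i"] by (simp add: scalar_mult_eq_scaleR)
    finally show "(\<Sum>p\<in>UNIV. Q (v i) (A *v ((v i $ p) *\<^sub>R axis p 1))) = Q (v i) (A *v v i)" .
  qed
  also have "\<dots> = (\<Sum>i\<in>UNIV. lam i)" by (simp add: ev scaleR' Qvv)
  finally show ?thesis .
qed

lemma psd: assumes "\<forall>i. lam i \<ge> 0" shows "Q (A *v x) x \<ge> 0"
proof -
  have "A *v x = (\<Sum>i\<in>UNIV. (Q (v i) x * lam i) *\<^sub>R v i)"
    by (subst expand_v[of x]) (simp add: mv_sum matrix_vector_mult_scaleR ev)
  then have "Q (A *v x) x = (\<Sum>i\<in>UNIV. (Q (v i) x * lam i) * Q (v i) x)"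
    by (simp add: sumL scaleL)
  also have "\<dots> \<ge> 0" using assms by (intro sum_nonneg) (simp add: mult.commute mult.left_commute)
  finally show ?thesis .
qed

end

definition cpoly :: "('a::euclidean_space \<Rightarrow> real poly) \<Rightarrow> bool" where
  "cpoly F \<longleftrightarrow> (\<forall>k. poly_fun (\<lambda>x. coeff (F x) k))"

lemma cpoly_const: "cpoly (\<lambda>x. c)"
  unfolding cpoly_def by (auto intro: poly_const)

lemma cpoly_lin: assumes "poly_fun f" shows "cpoly (\<lambda>x. [:f x, d:])"
  unfolding cpoly_def
proof
  fix k show "poly_fun (\<lambda>x. coeff [:f x, d:] k)"
  proof (cases k)
    case 0 then show ?thesis using assms by simp
  next
    case (Suc m) then show ?thesis by (cases m) (auto intro: poly_const)
  qed
qed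

lemma cpoly_mult: assumes "cpoly F" "cpoly G" shows "cpoly (\<lambda>x. F x * G x)"
  unfolding cpoly_def coeff_mult
  using assms unfolding cpoly_def by (auto intro!: poly_fun_sum poly_mult)

lemma cpoly_add: assumes "cpoly F" "cpoly G" shows "cpoly (\<lambda>x. F x + G x)"
  using assms unfolding cpoly_def by (auto intro!: poly_add)

lemma cpoly_sum: "finite S \<Longrightarrow> (\<And>i. i \<in> S \<Longrightarrow> cpoly (F i)) \<Longrightarrow> cpoly (\<lambda>x. \<Sum>i\<in>S. F i x)"
proof (induction S rule: finite_induct)
  case empty then show ?case using cpoly_const[of 0] by simp
next
  case (insert a S) then show ?case by (simp add: cpoly_add)
qed

lemma cpoly_prod: "finite S \<Longrightarrow> (\<And>i. i \<in> S \<Longrightarrow> cpoly (F i)) \<Longrightarrow> cpoly (\<lambda>x. \<Prod>i\<in>S. F i x)"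
proof (induction S rule: finite_induct)
  case empty then show ?case using cpoly_const[of 1] by simp
next
  case (insert a S) then show ?case by (simp add: cpoly_mult)
qed

lemma cpoly_det: assumes "\<And>i j. cpoly (\<lambda>x. B x $ i $ j)"
  shows "cpoly (\<lambda>x. det (B x :: real poly^'m^'m))"
  unfolding det_def
  by (intro cpoly_sum cpoly_mult cpoly_const cpoly_prod assms) (simp_all add: finite_permutations)

lemma poly_det: "poly (det (B :: real poly^'m^'m)) t = det (\<chi> i j. poly (B $ i $ j) t)"
  unfolding det_def by (simp add: poly_sum poly_prod)

definition cpm :: "real^'m^'m \<Rightarrow> real poly" where
  "cpm M = det (\<chi> i j. [:M $ i $ j, if i = j then 1 else 0:])"

lemma poly_cpm: "poly (cpm M) t = det (mat t + M)"
  unfolding cpm_def poly_det by (rule arg_cong[where f=det]) (simp add: vec_eq_iff mat_def)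

lemma mat_mv: "mat t *v (x :: real^'m) = t *\<^sub>R x"
proof -
  have "(\<Sum>j\<in>UNIV. (if i = j then t else 0) * x $ j) = t * x $ i" for i
  proof -
    have "(\<Sum>j\<in>UNIV. (if i = j then t else 0) * x $ j) = (\<Sum>j\<in>UNIV. if i = j then t * x $ j else 0)"
      by (rule sum.cong) auto
    then show ?thesis by simp
  qed
  then show ?thesis by (simp add: vec_eq_iff matrix_vector_mult_def mat_def)
qed

lemma bilinear_inner_vec: "bilinear ((\<bullet>) :: real^'m \<Rightarrow> real^'m \<Rightarrow> real)"
  using bilinear_conv_bounded_bilinear bounded_bilinear_inner by blast

lemma qip_inner: "qip ((\<bullet>) :: real^'m \<Rightarrow> real^'m \<Rightarrow> real)"
  by unfold_locales (auto simp: bilinear_inner_vec inner_commute)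

lemma sym_op_inner: assumes "transpose M = M" shows "symmetric_op (\<bullet>) (M :: real^'m^'m)"
  unfolding symmetric_op_def
proof (intro allI)
  fix x y :: "real^'m"
  have "M *v x = x v* M" using transpose_matrix_vector[of M x] assms by simp
  then show "(M *v x) \<bullet> y = x \<bullet> (M *v y)" by (simp add: dot_lmul_matrix)
qed

lemma sym_diag: assumes symM: "transpose M = (M :: real^'m^'m)"
  shows "\<exists>lam::'m \<Rightarrow> real. (\<forall>t. det (mat t + M) = (\<Prod>i\<in>UNIV. t + lam i)) \<and> ((\<forall>c. 0 \<le> (M *v c) \<bullet> c) \<longleftrightarrow> (\<forall>i. lam i \<ge> 0))"
proof -
  interpret I: qip "(\<bullet>) :: real^'m \<Rightarrow> real^'m \<Rightarrow> real" by (rule qip_inner)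
  obtain v where v: "I.ON v" "\<And>i. M *v v i = ((M *v v i) \<bullet> v i) *\<^sub>R v i"
    using I.spectral[OF sym_op_inner[OF symM]] by blast
  define lam where "lam i = (M *v v i) \<bullet> v i" for i
  interpret E: eig "(\<bullet>) :: real^'m \<Rightarrow> real^'m \<Rightarrow> real" M v lam
    by unfold_locales (use v sym_op_inner[OF symM] in \<open>auto simp: lam_def\<close>)
  define U :: "real^'m^'m" where "U = (\<chi> p i. v i $ p)"
  have ent: "(transpose U ** N ** U) $ i $ j = v i \<bullet> (N *v v j)" for N i j
    unfolding U_def by (simp add: matrix_matrix_mult_def matrix_vector_mult_def inner_vec_def
        transpose_def sum_distrib_left sum_distrib_right mult.assoc mult.left_commute)
      (rule sum.swap)
  have UU: "transpose U ** U = mat 1"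
  proof -
    have "transpose U ** U = transpose U ** mat 1 ** U" by simp
    also have "\<dots> = mat 1"
    proof -
      have "(transpose U ** mat 1 ** U) $ i $ j = (if i = j then 1 else 0)" for i j
        using ent[of "mat 1" i j] by (simp add: E.Qvv)
      then show ?thesis by (simp add: vec_eq_iff mat_def)
    qed
    finally show ?thesis .
  qed
  have dU: "det U * det U = 1"
    using arg_cong[OF UU, of det] by (simp add: det_mul)
  have det_eq: "det (mat t + M) = (\<Prod>i\<in>UNIV. t + lam i)" for t
  proof -
    have "transpose U ** (mat t + M) ** U = (\<chi> i j. if i = j then t + lam i else 0)"
    proof -
      have "(mat t + M) *v v j = (t + lam j) *\<^sub>R v j" for j
        by (simp add: matrix_vector_mult_add_rdistrib E.ev scaleR_add_left mat_mv)
      then have "(transpose U ** (mat t + M) ** U) $ i $ j = (if i = j then t + lam i else 0)" for i j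
        using ent[of "mat t + M" i j] by (simp add: E.Qvv inner_scaleR_right)
      then show ?thesis by (simp add: vec_eq_iff)
    qed
    then have "det (transpose U ** (mat t + M) ** U) = (\<Prod>i\<in>UNIV. t + lam i)"
      by (simp add: det_diagonal)
    moreover have "det (transpose U ** (mat t + M) ** U) = det U * det U * det (mat t + M)"
      by (simp add: det_mul)
    ultimately show ?thesis using dU by simp
  qed
  have "(\<forall>c. 0 \<le> (M *v c) \<bullet> c) \<longleftrightarrow> (\<forall>i. lam i \<ge> 0)"
  proof
    assume h: "\<forall>c. 0 \<le> (M *v c) \<bullet> c"
    show "\<forall>i. lam i \<ge> 0" using h unfolding lam_def by blast
  next
    assume "\<forall>i. lam i \<ge> 0"
    then show "\<forall>c. 0 \<le> (M *v c) \<bullet> c" using E.psd by blast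
  qed
  then have "(\<forall>t. det (mat t + M) = (\<Prod>i\<in>UNIV. t + lam i)) \<and> ((\<forall>c. 0 \<le> (M *v c) \<bullet> c) \<longleftrightarrow> (\<forall>i. lam i \<ge> 0))"
    using det_eq by blast
  then show ?thesis by blast
qed


lemma coeff_prod_nonneg: "finite S \<Longrightarrow> (\<And>i k. i \<in> S \<Longrightarrow> coeff (f i) k \<ge> (0::real)) \<Longrightarrow> coeff (\<Prod>i\<in>S. f i) k \<ge> 0"
proof (induction S arbitrary: k rule: finite_induct)
  case empty then show ?case by (simp add: coeff_1)
next
  case (insert a S)
  then show ?case by (simp add: coeff_mult sum_nonneg)
qed

lemma psd_coeff: assumes symM: "transpose M = (M :: real^'m^'m)"
  shows "(\<forall>c. 0 \<le> (M *v c) \<bullet> c) \<longleftrightarrow> (\<forall>k \<le> CARD('m). coeff (cpm M) k \<ge> 0)"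
proof -
  obtain lam :: "'m \<Rightarrow> real" where L: "\<And>t. det (mat t + M) = (\<Prod>i\<in>UNIV. t + lam i)"
    "(\<forall>c. 0 \<le> (M *v c) \<bullet> c) \<longleftrightarrow> (\<forall>i. lam i \<ge> 0)"
    using sym_diag[OF symM] by blast
  define P where "P = (\<Prod>i\<in>UNIV. [:lam i, 1:])"
  have pP: "poly P t = (\<Prod>i\<in>UNIV. t + lam i)" for t
    unfolding P_def poly_prod by (simp add: add.commute)
  have "poly (cpm M) = poly P"
    by (rule ext) (simp only: poly_cpm L(1) pP)
  then have cP: "cpm M = P" by (simp add: poly_eq_poly_eq_iff)
  have degP: "degree P \<le> CARD('m)"
    unfolding P_def using degree_prod_sum_le[of UNIV "\<lambda>i. [:lam i, 1:]"] by simp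
  have lcP: "lead_coeff P = 1" unfolding P_def by (simp add: lead_coeff_prod)
  show ?thesis
  proof
    assume "\<forall>c. 0 \<le> (M *v c) \<bullet> c"
    then have "\<forall>i. lam i \<ge> 0" using L(2) by blast
    then show "\<forall>k \<le> CARD('m). coeff (cpm M) k \<ge> 0" unfolding cP P_def
      by (auto intro!: coeff_prod_nonneg simp: coeff_pCons split: nat.split)
  next
    assume h: "\<forall>k \<le> CARD('m). coeff (cpm M) k \<ge> 0"
    have hk: "coeff P k \<ge> 0" for k
    proof (cases "k \<le> CARD('m)")
      case True then show ?thesis using h cP by auto
    next
      case False then have "coeff P k = 0" using degP by (intro coeff_eq_0) simp
      then show ?thesis by simp
    qed
    have "\<forall>i. lam i \<ge> 0"
    proof (rule ccontr)
      assume "\<not> (\<forall>i. lam i \<ge> 0)"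
      then obtain i where i: "lam i < 0" using not_le by blast
      define s where "s = - lam i"
      have s: "s > 0" unfolding s_def using i by simp
      have z: "poly [:lam i, 1:] s = 0" by (simp add: s_def)
      have "poly P s = 0" unfolding P_def poly_prod
        apply (rule prod_zero)
         apply simp
        using z by blast
      moreover have "poly P s > 0"
      proof -
        have "poly P s = (\<Sum>k\<le>degree P. coeff P k * s ^ k)" by (rule poly_altdef)
        also have "\<dots> \<ge> coeff P (degree P) * s ^ degree P"
          by (rule member_le_sum) (use hk s in auto)
        moreover have "s ^ degree P > 0" using s by simp
        ultimately show ?thesis using lcP by simp
      qed
      ultimately show False by simp
    qed
    then show "\<forall>c. 0 \<le> (M *v c) \<bullet> c" using L(2) by blast
  qed
qed

lemma psd_sa:
  fixes h :: "'m::finite \<Rightarrow> 'm \<Rightarrow> 'x::euclidean_space \<Rightarrow> real"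
  assumes ph: "\<And>a b. poly_fun (h a b)"
  shows "semialgebraic {x. \<forall>c::real^'m. 0 \<le> (\<Sum>a\<in>UNIV. \<Sum>b\<in>UNIV. c$a * c$b * h a b x)}"
proof -
  define M :: "'x \<Rightarrow> real^'m^'m" where "M x = (\<chi> a b. (h a b x + h b a x) / 2)" for x
  have symM: "transpose (M x) = M x" for x unfolding M_def transpose_def by (simp add: vec_eq_iff add.commute)
  have quad: "(M x *v c) \<bullet> c = (\<Sum>a\<in>UNIV. \<Sum>b\<in>UNIV. c$a * c$b * h a b x)" for x c
  proof -
    have "(M x *v c) \<bullet> c = (\<Sum>a\<in>UNIV. \<Sum>b\<in>UNIV. c$a * c$b * ((h a b x + h b a x) / 2))"
      unfolding M_def by (simp add: inner_vec_def matrix_vector_mult_def sum_distrib_left sum_distrib_right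
          ac_simps)
    also have "\<dots> = (\<Sum>a\<in>UNIV. \<Sum>b\<in>UNIV. c$a * c$b * h a b x / 2 + c$a * c$b * h b a x / 2)"
      by (intro sum.cong refl) (simp add: add_divide_distrib distrib_left)
    also have "\<dots> = (\<Sum>a\<in>UNIV. \<Sum>b\<in>UNIV. c$a * c$b * h a b x) / 2 + (\<Sum>a\<in>UNIV. \<Sum>b\<in>UNIV. c$a * c$b * h b a x) / 2"
      by (simp only: sum.distrib sum_divide_distrib)
    also have "(\<Sum>a\<in>UNIV. \<Sum>b\<in>UNIV. c$a * c$b * h b a x) = (\<Sum>a\<in>UNIV. \<Sum>b\<in>UNIV. c$a * c$b * h a b x)"
      by (subst sum.swap) (simp add: mult.commute)
    finally show ?thesis by linarith
  qed
  have "{x. \<forall>c::real^'m. 0 \<le> (\<Sum>a\<in>UNIV. \<Sum>b\<in>UNIV. c$a * c$b * h a b x)}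
      = (\<Inter>k\<in>{..CARD('m)}. {x. coeff (cpm (M x)) k \<ge> 0})"
  proof (rule set_eqI)
    fix x
    have "(\<forall>c::real^'m. 0 \<le> (\<Sum>a\<in>UNIV. \<Sum>b\<in>UNIV. c$a * c$b * h a b x)) \<longleftrightarrow> (\<forall>c. 0 \<le> (M x *v c) \<bullet> c)"
      by (simp only: quad)
    also have "\<dots> \<longleftrightarrow> (\<forall>k \<le> CARD('m). coeff (cpm (M x)) k \<ge> 0)" by (rule psd_coeff[OF symM])
    also have "\<dots> \<longleftrightarrow> (\<forall>k\<in>{..CARD('m)}. coeff (cpm (M x)) k \<ge> 0)"
      unfolding Ball_def atMost_iff by (rule refl)
    finally show "x \<in> {x. \<forall>c::real^'m. 0 \<le> (\<Sum>a\<in>UNIV. \<Sum>b\<in>UNIV. c$a * c$b * h a b x)} \<longleftrightarrow>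
      x \<in> (\<Inter>k\<in>{..CARD('m)}. {x. coeff (cpm (M x)) k \<ge> 0})" by simp
  qed
  moreover have "semialgebraic (\<Inter>k\<in>{..CARD('m)}. {x. coeff (cpm (M x)) k \<ge> 0})"
  proof (intro sa_Inter sa_ge)
    fix k
    have "cpoly (\<lambda>x. cpm (M x))" unfolding cpm_def
    proof (intro cpoly_det)
      fix i j
      have "poly_fun (\<lambda>x. (1/2) * (h i j x + h j i x))" by (intro poly_fun_cmult poly_add ph)
      moreover have "(\<lambda>x. (1/2) * (h i j x + h j i x)) = (\<lambda>x. M x $ i $ j)"
        unfolding M_def by auto
      ultimately have pf: "poly_fun (\<lambda>x. M x $ i $ j)" by simp
      show "cpoly (\<lambda>x. (\<chi> i j. [:M x $ i $ j, if i = j then 1 else 0:]) $ i $ j)"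
        using cpoly_lin[OF pf, of "if i = j then 1 else 0"] by simp
    qed
    then show "poly_fun (\<lambda>x. coeff (cpm (M x)) k)" unfolding cpoly_def by blast
  qed simp
  ultimately show ?thesis by simp
qed


lemma vexp: "(x::real^'n) = (\<Sum>p\<in>UNIV. x$p *\<^sub>R axis p 1)"
  using basis_expansion[of x] by (simp add: scalar_mult_eq_scaleR)

lemma bil_expand: assumes "bilinear f"
  shows "f (x::real^'n) (y::real^'k) = (\<Sum>p\<in>UNIV. \<Sum>q\<in>UNIV. (x$p * y$q) *\<^sub>R f (axis p 1) (axis q 1))"
proof -
  have "f x y = f (\<Sum>p\<in>UNIV. x$p *\<^sub>R axis p 1) (\<Sum>q\<in>UNIV. y$q *\<^sub>R axis q 1)"
    using vexp[of x] vexp[of y] by simp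
  also have "\<dots> = (\<Sum>(p,q)\<in>UNIV \<times> UNIV. f (x$p *\<^sub>R axis p 1) (y$q *\<^sub>R axis q 1))"
    by (rule bilinear_sum[OF assms])
  also have "\<dots> = (\<Sum>(p,q)\<in>UNIV \<times> UNIV. (x$p * y$q) *\<^sub>R f (axis p 1) (axis q 1))"
    by (simp add: bilinear_lmul[OF assms] bilinear_rmul[OF assms] mult.commute)
  also have "\<dots> = (\<Sum>p\<in>UNIV. \<Sum>q\<in>UNIV. (x$p * y$q) *\<^sub>R f (axis p 1) (axis q 1))"
    by (simp add: sum.cartesian_product)
  finally show ?thesis .
qed

definition pvec :: "(real^'n^'n \<Rightarrow> real^'m) \<Rightarrow> bool" where
  "pvec f \<longleftrightarrow> (\<forall>p. poly_fun (\<lambda>A. f A $ p))"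

lemma pvec_const: "pvec (\<lambda>A. c)" unfolding pvec_def by (auto intro: poly_const)

lemma pvec_mv: assumes "pvec x" shows "pvec (\<lambda>A. A *v x A)"
  unfolding pvec_def matrix_vector_mult_def
  using assms unfolding pvec_def by (auto intro!: poly_fun_sum poly_mult poly_fun_entry)

lemma pf_bil: assumes "bilinear g" "pvec x" "pvec y"
  shows "poly_fun (\<lambda>A. g (x A) (y A) :: real)"
proof -
  have px: "poly_fun (\<lambda>A. x A $ p)" and py: "poly_fun (\<lambda>A. y A $ q)" for p q
    using assms(2,3) unfolding pvec_def by blast+
  have "poly_fun (\<lambda>A. \<Sum>p\<in>UNIV. \<Sum>q\<in>UNIV. (x A $ p * y A $ q) * g (axis p 1) (axis q 1))"
    by (intro poly_fun_sum poly_mult[OF poly_mult[OF px py] poly_const]) simp_all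
  moreover have "g (x A) (y A) = (\<Sum>p\<in>UNIV. \<Sum>q\<in>UNIV. (x A $ p * y A $ q) * g (axis p 1) (axis q 1))" for A
    using bil_expand[OF assms(1), of "x A" "y A"] by simp
  ultimately show ?thesis by simp
qed

lemma pvec_bil: assumes "bilinear f" "pvec x" "pvec y"
  shows "pvec (\<lambda>A. f (x A) (y A) :: real^'k)"
  unfolding pvec_def
proof
  fix r
  have px: "poly_fun (\<lambda>A. x A $ p)" and py: "poly_fun (\<lambda>A. y A $ q)" for p q
    using assms(2,3) unfolding pvec_def by blast+
  have "poly_fun (\<lambda>A. \<Sum>p\<in>UNIV. \<Sum>q\<in>UNIV. (x A $ p * y A $ q) * (f (axis p 1) (axis q 1) $ r))"
    by (intro poly_fun_sum poly_mult[OF poly_mult[OF px py] poly_const]) simp_all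
  moreover have "f (x A) (y A) $ r = (\<Sum>p\<in>UNIV. \<Sum>q\<in>UNIV. (x A $ p * y A $ q) * (f (axis p 1) (axis q 1) $ r))" for A
    using bil_expand[OF assms(1), of "x A" "y A"] by (simp add: sum_component)
  ultimately show "poly_fun (\<lambda>A. f (x A) (y A) $ r)" by simp
qed


locale fl = qip Q for Q :: "real^'n \<Rightarrow> real^'n \<Rightarrow> real" +
  fixes br :: "real^'n \<Rightarrow> real^'n \<Rightarrow> real^'n"
  assumes bilbr: "bilinear br"
begin

primrec Lop :: "real^'n^'n \<Rightarrow> nat \<Rightarrow> real^'n \<Rightarrow> real^'n \<Rightarrow> real^'n \<Rightarrow> real" where
  "Lop A 0 = (\<lambda>x y z. Q (br x y) z)"
| "Lop A (Suc k) = (\<lambda>x y z. Lop A k (A *v x) y z + Lop A k x (A *v y) z - Lop A k x y (A *v z))"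

lemma linbr1: "linear (\<lambda>x. br x y)" using bilbr unfolding bilinear_def by blast
lemma linbr2: "linear (\<lambda>y. br x y)" using bilbr unfolding bilinear_def by blast

lemma lin_mv: "linear (\<lambda>x. (A::real^'n^'n) *v x)" by simp

lemma lin1: "linear (\<lambda>x. Lop A k x y z)"
proof (induction k arbitrary: y z)
  case 0
  show ?case using linear_compose[OF linbr1 linL] by (simp add: o_def)
next
  case (Suc k)
  have a: "linear (\<lambda>x. Lop A k (A *v x) y z)" using linear_compose[OF lin_mv Suc.IH] by (simp add: o_def)
  show ?case unfolding Lop.simps
    by (intro linear_compose_sub linear_compose_add a Suc.IH)
qed

lemma lin2: "linear (\<lambda>y. Lop A k x y z)"
proof (induction k arbitrary: x z)
  case 0
  show ?case using linear_compose[OF linbr2 linL] by (simp add: o_def)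
next
  case (Suc k)
  have a: "linear (\<lambda>y. Lop A k x (A *v y) z)" using linear_compose[OF lin_mv Suc.IH] by (simp add: o_def)
  show ?case unfolding Lop.simps
    by (intro linear_compose_sub linear_compose_add a Suc.IH)
qed

lemma lin3: "linear (\<lambda>z. Lop A k x y z)"
proof (induction k arbitrary: x y)
  case 0
  show ?case using linR by simp
next
  case (Suc k)
  have a: "linear (\<lambda>z. Lop A k x y (A *v z))" using linear_compose[OF lin_mv Suc.IH] by (simp add: o_def)
  show ?case unfolding Lop.simps
    by (intro linear_compose_sub linear_compose_add a Suc.IH)
qed

lemma Lop_poly: "pvec x \<Longrightarrow> pvec y \<Longrightarrow> pvec z \<Longrightarrow> poly_fun (\<lambda>A. Lop A k (x A) (y A) (z A))"
proof (induction k arbitrary: x y z)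
  case 0
  show ?case unfolding Lop.simps using pf_bil[OF bil pvec_bil[OF bilbr 0(1,2)] 0(3)] by simp
next
  case (Suc k)
  have "poly_fun (\<lambda>A. Lop A k (A *v x A) (y A) (z A) + Lop A k (x A) (A *v y A) (z A) - Lop A k (x A) (y A) (A *v z A))"
    by (intro poly_fun_diff poly_add Suc.IH pvec_mv Suc.prems)
  then show ?case by simp
qed

lemma Lop_eig: assumes "A *v a = \<alpha> *\<^sub>R a" "A *v b = \<beta> *\<^sub>R b" "A *v c = \<gamma> *\<^sub>R c"
  shows "Lop A k a b c = (\<alpha> + \<beta> - \<gamma>)^k * Q (br a b) c"
proof (induction k)
  case 0 then show ?case by simp
next
  case (Suc k)
  have "Lop A (Suc k) a b c = \<alpha> * Lop A k a b c + \<beta> * Lop A k a b c - \<gamma> * Lop A k a b c"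
    using linear_scale[OF lin1[where A=A and k=k and y=b and z=c]]
      linear_scale[OF lin2[where A=A and k=k and x=a and z=c]]
      linear_scale[OF lin3[where A=A and k=k and x=a and y=b]]
    by (simp add: assms)
  also have "\<dots> = (\<alpha> + \<beta> - \<gamma>) * Lop A k a b c" by (simp add: algebra_simps)
  finally show ?case using Suc.IH by simp
qed

end

lemma trip1: "(\<Sum>i\<in>UNIV. \<Sum>j\<in>UNIV. \<Sum>l\<in>UNIV. f i j l) = (\<Sum>i\<in>(UNIV::'a::finite set). \<Sum>m\<in>(UNIV::('b::finite \<times> 'c::finite) set). f i (fst m) (snd m))"
  by (simp add: sum.cartesian_product split_def)

lemma trip2: "(\<Sum>i\<in>UNIV. \<Sum>j\<in>UNIV. \<Sum>l\<in>UNIV. f i j l) = (\<Sum>j\<in>(UNIV::'b::finite set). \<Sum>m\<in>(UNIV::('a::finite \<times> 'c::finite) set). f (fst m) j (snd m))"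
proof -
  have "(\<Sum>i\<in>UNIV. \<Sum>j\<in>UNIV. \<Sum>l\<in>UNIV. f i j l) = (\<Sum>j\<in>(UNIV::'b set). \<Sum>i\<in>(UNIV::'a set). \<Sum>l\<in>(UNIV::'c set). f i j l)"
    by (rule sum.swap)
  then show ?thesis by (simp add: sum.cartesian_product split_def)
qed

lemma trip3: "(\<Sum>i\<in>UNIV. \<Sum>j\<in>UNIV. \<Sum>l\<in>UNIV. f i j l) = (\<Sum>l\<in>(UNIV::'c::finite set). \<Sum>m\<in>(UNIV::('a::finite \<times> 'b::finite) set). f (fst m) (snd m) l)"
proof -
  have "(\<Sum>i\<in>UNIV. \<Sum>j\<in>UNIV. \<Sum>l\<in>UNIV. f i j l) = (\<Sum>i\<in>(UNIV::'a set). \<Sum>l\<in>(UNIV::'c set). \<Sum>j\<in>(UNIV::'b set). f i j l)"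
    by (intro sum.cong refl) (rule sum.swap)
  also have "\<dots> = (\<Sum>l\<in>(UNIV::'c set). \<Sum>i\<in>(UNIV::'a set). \<Sum>j\<in>(UNIV::'b set). f i j l)"
    by (rule sum.swap)
  finally show ?thesis by (simp add: sum.cartesian_product split_def)
qed

context qip begin

lemma lin_expand: assumes "ON w" "linear f" shows "f x = (\<Sum>i\<in>UNIV. Q (w i) x * f (w i))"
proof -
  have "f x = f (\<Sum>i\<in>UNIV. Q (w i) x *\<^sub>R w i)" by (rule arg_cong[OF ON_expand[OF assms(1), of x]])
  also have "\<dots> = (\<Sum>i\<in>UNIV. Q (w i) x * f (w i))"
    by (simp add: linear_sum[OF assms(2)] linear_scale[OF assms(2)])
  finally show ?thesis .
qed

lemma onb_change: assumes u: "ON u" and v: "ON v" and f: "linear f" and g: "linear g"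
  shows "(\<Sum>i\<in>UNIV. f (v i) * g (v i) :: real) = (\<Sum>i\<in>UNIV. f (u i) * g (u i))"
proof -
  have "(\<Sum>i\<in>UNIV. f (v i) * g (v i)) = (\<Sum>i\<in>UNIV. \<Sum>q\<in>UNIV. f (v i) * (Q (u q) (v i) * g (u q)))"
  proof (rule sum.cong[OF refl])
    fix i
    have "g (v i) = (\<Sum>q\<in>UNIV. Q (u q) (v i) * g (u q))" by (rule lin_expand[OF u g])
    then show "f (v i) * g (v i) = (\<Sum>q\<in>UNIV. f (v i) * (Q (u q) (v i) * g (u q)))"
      by (simp only: sum_distrib_left)
  qed
  also have "\<dots> = (\<Sum>q\<in>UNIV. \<Sum>i\<in>UNIV. f (v i) * (Q (u q) (v i) * g (u q)))"
    by (rule sum.swap)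
  also have "\<dots> = (\<Sum>q\<in>UNIV. g (u q) * (\<Sum>i\<in>UNIV. Q (v i) (u q) * f (v i)))"
  proof (rule sum.cong[OF refl])
    fix q
    have "(\<Sum>i\<in>UNIV. f (v i) * (Q (u q) (v i) * g (u q))) = (\<Sum>i\<in>UNIV. g (u q) * (Q (v i) (u q) * f (v i)))"
    proof (rule sum.cong[OF refl])
      fix i
      have "Q (u q) (v i) = Q (v i) (u q)" by (rule symQ)
      then show "f (v i) * (Q (u q) (v i) * g (u q)) = g (u q) * (Q (v i) (u q) * f (v i))"
        by (simp only: mult.commute mult.left_commute)
    qed
    then show "(\<Sum>i\<in>UNIV. f (v i) * (Q (u q) (v i) * g (u q))) = g (u q) * (\<Sum>i\<in>UNIV. Q (v i) (u q) * f (v i))"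
      by (simp only: sum_distrib_left)
  qed
  also have "\<dots> = (\<Sum>q\<in>UNIV. g (u q) * f (u q))"
  proof (rule sum.cong[OF refl])
    fix q
    have "(\<Sum>i\<in>UNIV. Q (v i) (u q) * f (v i)) = f (u q)" by (rule lin_expand[OF v f, symmetric])
    then show "g (u q) * (\<Sum>i\<in>UNIV. Q (v i) (u q) * f (v i)) = g (u q) * f (u q)" by (simp only:)
  qed
  finally show ?thesis by (simp add: mult.commute)
qed

lemma onb_change_sum: assumes u: "ON u" and v: "ON v" and f: "\<And>m. linear (f m)" and g: "\<And>m. linear (g m)"
  shows "(\<Sum>i\<in>UNIV. \<Sum>m\<in>(UNIV::'k::finite set). f m (v i) * g m (v i) :: real) = (\<Sum>i\<in>UNIV. \<Sum>m\<in>UNIV. f m (u i) * g m (u i))"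
proof -
  have "(\<Sum>i\<in>UNIV. \<Sum>m\<in>(UNIV::'k set). f m (v i) * g m (v i)) = (\<Sum>m\<in>UNIV. \<Sum>i\<in>UNIV. f m (v i) * g m (v i))"
    by (rule sum.swap)
  also have "\<dots> = (\<Sum>m\<in>UNIV. \<Sum>i\<in>UNIV. f m (u i) * g m (u i))"
    using onb_change[OF u v f g] by simp
  also have "\<dots> = (\<Sum>i\<in>UNIV. \<Sum>m\<in>UNIV. f m (u i) * g m (u i))"
    by (rule sum.swap)
  finally show ?thesis .
qed

end

context fl begin

definition W :: "real^'n^'n \<Rightarrow> nat \<Rightarrow> ('n \<Rightarrow> real^'n) \<Rightarrow> ('n \<Rightarrow> real^'n) \<Rightarrow> ('n \<Rightarrow> real^'n) \<Rightarrow> real" where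
  "W A k a b c = (\<Sum>i\<in>UNIV. \<Sum>j\<in>UNIV. \<Sum>l\<in>UNIV. Lop A k (a i) (b j) (c l) * Lop A 0 (a i) (b j) (c l))"

lemma lin01: "linear (\<lambda>x. Q (br x y) z)" using lin1[where k=0] by simp
lemma lin02: "linear (\<lambda>x. Q (br y x) z)" using lin2[where k=0] by simp
lemma lin03: "linear (Q w)" using linR by (simp add: eta_contract_eq)

lemma W_slot1: "ON u \<Longrightarrow> ON v \<Longrightarrow> W A k u b c = W A k v b c"
  unfolding W_def trip1 by (rule onb_change_sum) (simp_all add: lin1 lin01)

lemma W_slot2: "ON u \<Longrightarrow> ON v \<Longrightarrow> W A k a u c = W A k a v c"
  unfolding W_def trip2 by (rule onb_change_sum) (simp_all add: lin2 lin02)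

lemma W_slot3: "ON u \<Longrightarrow> ON v \<Longrightarrow> W A k a b u = W A k a b v"
  unfolding W_def trip3 by (rule onb_change_sum) (simp_all add: lin3 lin03)

lemma W_change: "ON u \<Longrightarrow> ON v \<Longrightarrow> W A k u u u = W A k v v v"
proof -
  assume u: "ON u" and v: "ON v"
  have "W A k u u u = W A k v u u" by (rule W_slot1[OF u v])
  also have "\<dots> = W A k v v u" by (rule W_slot2[OF u v])
  also have "\<dots> = W A k v v v" by (rule W_slot3[OF u v])
  finally show ?thesis .
qed

lemma W_poly: "poly_fun (\<lambda>A. W A k u u u)"
  unfolding W_def
  by (intro poly_fun_sum poly_mult Lop_poly pvec_const) simp_all

end


locale fle = fl Q br + eig Q A v lam
  for Q :: "real^'n \<Rightarrow> real^'n \<Rightarrow> real" and br A v lam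
begin

definition mu :: "'n \<times> 'n \<times> 'n \<Rightarrow> real" where
  "mu r = lam (fst r) + lam (fst (snd r)) - lam (snd (snd r))"
definition wt :: "'n \<times> 'n \<times> 'n \<Rightarrow> real" where
  "wt r = (Q (br (v (fst r)) (v (fst (snd r)))) (v (snd (snd r))))^2"

lemma W_sum: "W A k v v v = (\<Sum>r\<in>UNIV. mu r ^ k * wt r)"
proof -
  have "W A k v v v = (\<Sum>i\<in>UNIV. \<Sum>j\<in>UNIV. \<Sum>l\<in>UNIV. (lam i + lam j - lam l)^k * (Q (br (v i) (v j)) (v l))^2)"
    unfolding W_def by (simp add: Lop_eig[OF ev ev ev] power2_eq_square mult.assoc)
  also have "\<dots> = (\<Sum>r\<in>UNIV. mu r ^ k * wt r)"
    unfolding mu_def wt_def by (simp add: sum.cartesian_product split_def UNIV_Times_UNIV[symmetric] del: UNIV_Times_UNIV)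
  finally show ?thesis .
qed

lemma filt_mu: "filtering Q br A \<longleftrightarrow> (\<forall>r. mu r < 0 \<longrightarrow> wt r = 0)"
  unfolding filtering_char[OF bilbr] mu_def wt_def
proof safe
  fix a b c :: 'n
  assume h: "\<forall>i j k. lam i + lam j < lam k \<longrightarrow> Q (br (v i) (v j)) (v k) = 0"
    and "lam (fst (a, b, c)) + lam (fst (snd (a, b, c))) - lam (snd (snd (a, b, c))) < 0"
  then show "(Q (br (v (fst (a, b, c))) (v (fst (snd (a, b, c))))) (v (snd (snd (a, b, c)))))\<^sup>2 = 0" by simp
next
  fix i j k assume h: "\<forall>r. lam (fst r) + lam (fst (snd r)) - lam (snd (snd r)) < 0 \<longrightarrow>
      (Q (br (v (fst r)) (v (fst (snd r)))) (v (snd (snd r))))\<^sup>2 = 0"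
    and "lam i + lam j < lam k"
  then show "Q (br (v i) (v j)) (v k) = 0" using h[rule_format, of "(i, j, k)"] by simp
qed

lemma quad_id:
  fixes c :: "real^('n \<times> 'n \<times> 'n)" and e :: "'n \<times> 'n \<times> 'n \<Rightarrow> nat"
  shows "(\<Sum>a\<in>UNIV. \<Sum>b\<in>UNIV. c$a * c$b * (\<Sum>r\<in>UNIV. mu r ^ (e a + e b + 1) * wt r))
    = (\<Sum>r\<in>UNIV. wt r * mu r * (\<Sum>a\<in>UNIV. c$a * mu r ^ e a)^2)"
proof -
  have "(\<Sum>r\<in>UNIV. wt r * mu r * (\<Sum>a\<in>UNIV. c$a * mu r ^ e a)^2)
      = (\<Sum>r\<in>UNIV. \<Sum>a\<in>UNIV. \<Sum>b\<in>UNIV. wt r * mu r * ((c$a * mu r ^ e a) * (c$b * mu r ^ e b)))"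
  proof (rule sum.cong[OF refl])
    fix r
    have sq: "(\<Sum>a\<in>UNIV. c$a * mu r ^ e a)^2 = (\<Sum>a\<in>UNIV. \<Sum>b\<in>UNIV. (c$a * mu r ^ e a) * (c$b * mu r ^ e b))"
      by (simp only: power2_eq_square sum_product)
    show "wt r * mu r * (\<Sum>a\<in>UNIV. c$a * mu r ^ e a)^2 = (\<Sum>a\<in>UNIV. \<Sum>b\<in>UNIV. wt r * mu r * ((c$a * mu r ^ e a) * (c$b * mu r ^ e b)))"
      unfolding sq by (simp only: sum_distrib_left)
  qed
  also have "\<dots> = (\<Sum>a\<in>UNIV. \<Sum>b\<in>UNIV. \<Sum>r\<in>UNIV. wt r * mu r * ((c$a * mu r ^ e a) * (c$b * mu r ^ e b)))"
  proof -
    have "(\<Sum>r\<in>UNIV. \<Sum>a\<in>UNIV. \<Sum>b\<in>UNIV. wt r * mu r * ((c$a * mu r ^ e a) * (c$b * mu r ^ e b)))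
        = (\<Sum>a\<in>UNIV. \<Sum>r\<in>UNIV. \<Sum>b\<in>UNIV. wt r * mu r * ((c$a * mu r ^ e a) * (c$b * mu r ^ e b)))"
      by (rule sum.swap)
    also have "\<dots> = (\<Sum>a\<in>UNIV. \<Sum>b\<in>UNIV. \<Sum>r\<in>UNIV. wt r * mu r * ((c$a * mu r ^ e a) * (c$b * mu r ^ e b)))"
      by (rule sum.cong[OF refl]) (rule sum.swap)
    finally show ?thesis .
  qed
  also have "\<dots> = (\<Sum>a\<in>UNIV. \<Sum>b\<in>UNIV. c$a * c$b * (\<Sum>r\<in>UNIV. mu r ^ (e a + e b + 1) * wt r))"
    by (intro sum.cong refl) (simp add: sum_distrib_left power_add ac_simps)
  finally show ?thesis by simp
qed

lemma poly_sum_bij: assumes e: "bij_betw e (UNIV::'r::finite set) {0..<N}" and d: "degree q < N"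
  shows "(\<Sum>a\<in>UNIV. coeff q (e a) * t ^ e a) = poly q (t::real)"
proof -
  have "(\<Sum>a\<in>UNIV. coeff q (e a) * t ^ e a) = (\<Sum>k\<in>{0..<N}. coeff q k * t ^ k)"
    using sum.reindex_bij_betw[OF e, of "\<lambda>k. coeff q k * t ^ k"] by simp
  also have "\<dots> = (\<Sum>k\<in>{..degree q}. coeff q k * t ^ k)"
    by (rule sum.mono_neutral_right) (use d in \<open>auto simp: coeff_eq_0\<close>)
  also have "\<dots> = poly q t" by (simp add: poly_altdef)
  finally show ?thesis .
qed

lemma hankel_filt:
  assumes e: "bij_betw e (UNIV::('n \<times> 'n \<times> 'n) set) {0..<CARD('n \<times> 'n \<times> 'n)}"
  shows "(\<forall>c::real^('n \<times> 'n \<times> 'n). 0 \<le> (\<Sum>a\<in>UNIV. \<Sum>b\<in>UNIV. c$a * c$b * W A (e a + e b + 1) v v v))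
     \<longleftrightarrow> filtering Q br A"
proof
  assume h: "\<forall>c::real^('n \<times> 'n \<times> 'n). 0 \<le> (\<Sum>a\<in>UNIV. \<Sum>b\<in>UNIV. c$a * c$b * W A (e a + e b + 1) v v v)"
  show "filtering Q br A" unfolding filt_mu
  proof (rule ccontr)
    assume "\<not> (\<forall>r. mu r < 0 \<longrightarrow> wt r = 0)"
    then obtain r0 where r0: "mu r0 < 0" "wt r0 \<noteq> 0" by blast
    have wpos: "wt r \<ge> 0" for r unfolding wt_def by simp
    have w0: "wt r0 > 0" using wpos[of r0] r0(2) by simp
    define m0 where "m0 = mu r0"
    define V where "V = mu ` {r. mu r \<noteq> m0}"
    have fV: "finite V" unfolding V_def by simp
    have cV: "card V < CARD('n \<times> 'n \<times> 'n)"
    proof -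
      have "card V \<le> card {r. mu r \<noteq> m0}" unfolding V_def by (rule card_image_le) simp
      also have "\<dots> < CARD('n \<times> 'n \<times> 'n)"
        by (rule psubset_card_mono) (auto simp: m0_def)
      finally show ?thesis .
    qed
    define q where "q = (\<Prod>s\<in>V. smult (1 / (m0 - s)) [:- s, 1:])"
    have dq: "degree q < CARD('n \<times> 'n \<times> 'n)"
    proof -
      have "degree q \<le> sum (degree \<circ> (\<lambda>s. smult (1 / (m0 - s)) [:- s, 1:])) V"
        unfolding q_def by (rule degree_prod_sum_le[OF fV])
      also have "\<dots> \<le> sum (\<lambda>s. 1) V"
        by (rule sum_mono) (simp add: degree_smult_le order_trans[OF degree_smult_le])
      also have "\<dots> = card V" by simp
      finally show ?thesis using cV by simp
    qed
    have mV: "m0 \<notin> V" unfolding V_def by auto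
    have pq: "poly q t = (\<Prod>s\<in>V. (t - s) * inverse (m0 - s))" for t
      unfolding q_def poly_prod by (intro prod.cong refl) (simp add: divide_inverse algebra_simps)
    have pq0: "poly q m0 = 1" unfolding pq
    proof (intro prod.neutral ballI)
      fix s assume "s \<in> V"
      then have "m0 - s \<noteq> 0" using mV by auto
      then show "(m0 - s) * inverse (m0 - s) = 1" by simp
    qed
    have pq1: "poly q (mu r) = 0" if "mu r \<noteq> m0" for r
    proof -
      have "mu r \<in> V" unfolding V_def using that by blast
      then show ?thesis unfolding pq by (intro prod_zero fV) auto
    qed
    define c :: "real^('n \<times> 'n \<times> 'n)" where "c = (\<chi> a. coeff q (e a))"
    have cs: "(\<Sum>a\<in>UNIV. c$a * t ^ e a) = poly q t" for t
      unfolding c_def using poly_sum_bij[OF e dq] by simp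
    have "(\<Sum>a\<in>UNIV. \<Sum>b\<in>UNIV. c$a * c$b * W A (e a + e b + 1) v v v)
        = (\<Sum>r\<in>UNIV. wt r * mu r * (poly q (mu r))^2)"
      by (simp only: W_sum quad_id cs)
    also have "\<dots> < 0"
    proof -
      let ?f = "\<lambda>r. wt r * mu r * (poly q (mu r))^2"
      have nonp: "?f r \<le> 0" for r
      proof (cases "mu r = m0")
        case True then show ?thesis using wpos[of r] r0(1) m0_def pq0
          by (simp add: mult_nonneg_nonpos)
      next
        case False then show ?thesis using pq1 by simp
      qed
      have "(\<Sum>r\<in>UNIV. ?f r) = ?f r0 + (\<Sum>r\<in>UNIV - {r0}. ?f r)"
        by (simp add: sum.remove)
      also have "(\<Sum>r\<in>UNIV - {r0}. ?f r) \<le> 0" by (rule sum_nonpos) (use nonp in blast)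
      moreover have "?f r0 < 0" using w0 r0(1) pq0 unfolding m0_def by (simp add: mult_pos_neg)
      ultimately show ?thesis by linarith
    qed
    finally show False using h by (meson not_le)
  qed
next
  assume "filtering Q br A"
  then have f: "mu r < 0 \<Longrightarrow> wt r = 0" for r unfolding filt_mu by blast
  show "\<forall>c::real^('n \<times> 'n \<times> 'n). 0 \<le> (\<Sum>a\<in>UNIV. \<Sum>b\<in>UNIV. c$a * c$b * W A (e a + e b + 1) v v v)"
  proof
    fix c :: "real^('n \<times> 'n \<times> 'n)"
    have "(\<Sum>a\<in>UNIV. \<Sum>b\<in>UNIV. c$a * c$b * W A (e a + e b + 1) v v v)
        = (\<Sum>r\<in>UNIV. wt r * mu r * (\<Sum>a\<in>UNIV. c$a * mu r ^ e a)^2)"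
      by (simp only: W_sum quad_id)
    also have "\<dots> \<ge> 0"
    proof (rule sum_nonneg)
      fix r
      show "0 \<le> wt r * mu r * (\<Sum>a\<in>UNIV. c$a * mu r ^ e a)^2"
      proof (cases "mu r < 0")
        case True then show ?thesis using f by simp
      next
        case False then show ?thesis unfolding wt_def by simp
      qed
    qed
    finally show "0 \<le> (\<Sum>a\<in>UNIV. \<Sum>b\<in>UNIV. c$a * c$b * W A (e a + e b + 1) v v v)" .
  qed
qed

end

lemma poly_quad: assumes "\<And>a b. poly_fun (h a b)"
  shows "poly_fun (\<lambda>x. \<Sum>a\<in>UNIV. \<Sum>b\<in>UNIV. (c::real^'m)$a * c$b * h a b x)"
  by (intro poly_fun_sum poly_mult[OF poly_const assms]) simp_all

lemma psd_set_closed: assumes "\<And>a b. poly_fun (h a b)"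
  shows "closed {x. \<forall>c::real^'m. 0 \<le> (\<Sum>a\<in>UNIV. \<Sum>b\<in>UNIV. c$a * c$b * h a b x)}"
proof -
  have "{x. \<forall>c::real^'m. 0 \<le> (\<Sum>a\<in>UNIV. \<Sum>b\<in>UNIV. c$a * c$b * h a b x)}
      = (\<Inter>c\<in>UNIV. {x. 0 \<le> (\<Sum>a\<in>UNIV. \<Sum>b\<in>UNIV. c$a * c$b * h a b x)})" by blast
  moreover have "closed (\<Inter>c\<in>UNIV. {x. 0 \<le> (\<Sum>a\<in>UNIV. \<Sum>b\<in>UNIV. (c::real^'m)$a * c$b * h a b x)})"
    by (intro closed_INT ballI closed_Collect_le continuous_on_const poly_fun_continuous poly_quad assms)
  ultimately show ?thesis by simp
qed

lemma closed_poly_eq: "poly_fun p \<Longrightarrow> poly_fun q \<Longrightarrow> closed {x. p x = q x}"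
  by (intro closed_Collect_eq poly_fun_continuous)

context fl begin

lemma bil_AL: "bilinear (\<lambda>x y. Q ((A::real^'n^'n) *v x) y)"
  unfolding bilinear_def
proof
  show "\<forall>x. linear (\<lambda>y. Q (A *v x) y)" using linR by blast
  show "\<forall>y. linear (\<lambda>x. Q (A *v x) y)"
    using linear_compose[OF lin_mv linL] by (simp add: o_def)
qed

lemma bil_AR: "bilinear (\<lambda>x y. Q x ((A::real^'n^'n) *v y))"
  unfolding bilinear_def
proof
  show "\<forall>x. linear (\<lambda>y. Q x (A *v y))" using linear_compose[OF lin_mv linR] by (simp add: o_def)
  show "\<forall>y. linear (\<lambda>x. Q x (A *v y))" using linL by blast
qed

lemma sym_iff: "symmetric_op Q A \<longleftrightarrow> (\<forall>p q. Q (A *v axis p 1) (axis q 1) = Q (axis p 1) (A *v axis q 1))"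
proof
  assume "symmetric_op Q A" then show "\<forall>p q. Q (A *v axis p 1) (axis q 1) = Q (axis p 1) (A *v axis q 1)"
    unfolding symmetric_op_def by blast
next
  assume h: "\<forall>p q. Q (A *v axis p 1) (axis q 1) = Q (axis p 1) (A *v axis q 1)"
  show "symmetric_op Q A" unfolding symmetric_op_def
  proof (intro allI)
    fix x y :: "real^'n"
    show "Q (A *v x) y = Q x (A *v y)"
      using bil_expand[OF bil_AL[of A], of x y] bil_expand[OF bil_AR[of A], of x y] h by simp
  qed
qed

lemma quadQ: "Q (A *v c) c = (\<Sum>a\<in>UNIV. \<Sum>b\<in>UNIV. c$a * c$b * Q ((A::real^'n^'n) *v axis a 1) (axis b 1))"
  using bil_expand[OF bil_AL[of A], of c c] by simp

lemma psd_iff: assumes "symmetric_op Q A"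
  shows "nonneg_spectrum A \<longleftrightarrow> (\<forall>c::real^'n. 0 \<le> (\<Sum>a\<in>UNIV. \<Sum>b\<in>UNIV. c$a * c$b * Q (A *v axis a 1) (axis b 1)))"
proof -
  obtain v where v: "ON v" "\<And>i. A *v v i = Q (A *v v i) (v i) *\<^sub>R v i" using spectral[OF assms] by blast
  interpret E: eig Q A v "\<lambda>i. Q (A *v v i) (v i)" by unfold_locales (use assms v in auto)
  show ?thesis unfolding quadQ[symmetric]
  proof
    assume "nonneg_spectrum A"
    then show "\<forall>c. 0 \<le> Q (A *v c) c" using E.nonneg_char E.psd by blast
  next
    assume h: "\<forall>c. 0 \<le> Q (A *v c) c"
    show "nonneg_spectrum A" unfolding nonneg_spectrum_def
    proof (intro allI impI)
      fix c w assume cw: "w \<noteq> 0 \<and> A *v w = c *\<^sub>R w"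
      have "0 \<le> Q (A *v w) w" using h by blast
      also have "\<dots> = c * Q w w" using cw by (simp add: scaleL)
      finally show "0 \<le> c" using posQ[of w] cw by (simp add: zero_le_mult_iff)
    qed
  qed
qed

lemma hk_iff: assumes "symmetric_op Q A" "ON u"
  and e: "bij_betw e (UNIV::('n \<times> 'n \<times> 'n) set) {0..<CARD('n \<times> 'n \<times> 'n)}"
  shows "filtering Q br A \<longleftrightarrow> (\<forall>c::real^('n \<times> 'n \<times> 'n). 0 \<le> (\<Sum>a\<in>UNIV. \<Sum>b\<in>UNIV. c$a * c$b * W A (e a + e b + 1) u u u))"
proof -
  obtain v where v: "ON v" "\<And>i. A *v v i = Q (A *v v i) (v i) *\<^sub>R v i" using spectral[OF assms(1)] by blast
  interpret E: fle Q br A v "\<lambda>i. Q (A *v v i) (v i)"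
    by unfold_locales (use assms v bilbr in auto)
  have "W A k u u u = W A k v v v" for k by (rule W_change[OF assms(2) v(1)])
  then show ?thesis using E.hankel_filt[OF e] by simp
qed

end


lemma norm_mat_le: assumes "\<And>p q. \<bar>(A::real^'n^'m) $ p $ q\<bar> \<le> B"
  shows "norm A \<le> real CARD('m) * (real CARD('n) * B)"
proof -
  have "norm A \<le> (\<Sum>p\<in>UNIV. norm (A $ p))" by (simp add: norm_vec_def L2_set_le_sum)
  also have "\<dots> \<le> (\<Sum>p\<in>(UNIV::'m set). real CARD('n) * B)"
  proof (rule sum_mono)
    fix p
    have "norm (A $ p) \<le> (\<Sum>q\<in>UNIV. \<bar>A $ p $ q\<bar>)" by (rule norm_le_l1_cart)
    also have "\<dots> \<le> (\<Sum>q\<in>(UNIV::'n set). B)" by (rule sum_mono) (rule assms)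
    finally show "norm (A $ p) \<le> real CARD('n) * B" by simp
  qed
  finally show ?thesis by simp
qed

context qip begin

lemma entry_mv: "(A::real^'n^'n) $ p $ q = (A *v axis q 1) $ p"
  by (simp add: matrix_vector_mult_def axis_def if_distrib cong: if_cong)

lemma bounded_F: "bounded {A. symmetric_op Q A \<and> nonneg_spectrum A \<and> trace A = 1}"
proof -
  obtain c where c: "c > 0" "\<And>x. c * (norm x)^2 \<le> Q x x" using coercive by blast
  obtain K where K: "K > 0" "\<And>a b. norm (Q a b) \<le> norm a * norm b * K"
    using bounded_bilinear.pos_bounded[OF bbil] by blast
  define B where "B = real CARD('n) * (K / c)"
  have entry: "\<bar>A $ p $ q\<bar> \<le> B" if A: "symmetric_op Q A" "nonneg_spectrum A" "trace A = 1" for A p q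
  proof -
    obtain v where v: "ON v" "\<And>i. A *v v i = Q (A *v v i) (v i) *\<^sub>R v i" using spectral[OF A(1)] by blast
    define lam where "lam i = Q (A *v v i) (v i)" for i
    interpret E: eig Q A v lam by unfold_locales (use A v in \<open>auto simp: lam_def\<close>)
    have l0: "lam i \<ge> 0" for i using E.nonneg_char A(2) by blast
    have l1: "lam i \<le> 1" for i
    proof -
      have "lam i \<le> (\<Sum>j\<in>UNIV. lam j)" by (rule member_le_sum) (use l0 in auto)
      then show ?thesis using E.trace_eq A(3) by simp
    qed
    have nv: "(norm (v i))^2 \<le> 1 / c" for i
      using c(2)[of "v i"] E.Qvv[of i i] c(1) by (simp add: field_simps)
    have "A *v axis q 1 = (\<Sum>i\<in>UNIV. (Q (v i) (axis q 1) * lam i) *\<^sub>R v i)"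
      by (subst E.expand_v[of "axis q 1"]) (simp add: E.mv_sum matrix_vector_mult_scaleR E.ev)
    then have "A $ p $ q = (\<Sum>i\<in>UNIV. Q (v i) (axis q 1) * lam i * v i $ p)"
      by (simp add: entry_mv sum_component)
    then have "\<bar>A $ p $ q\<bar> \<le> (\<Sum>i\<in>UNIV. \<bar>Q (v i) (axis q 1) * lam i * v i $ p\<bar>)"
      by (simp add: sum_abs)
    also have "\<dots> \<le> (\<Sum>i\<in>(UNIV::'n set). K / c)"
    proof (rule sum_mono)
      fix i
      have "\<bar>Q (v i) (axis q 1)\<bar> \<le> norm (v i) * K" using K(2)[of "v i" "axis q 1"] by simp
      moreover have "\<bar>lam i\<bar> \<le> 1" using l0 l1 by simp
      moreover have "\<bar>v i $ p\<bar> \<le> norm (v i)" by (rule component_le_norm_cart)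
      ultimately have "\<bar>Q (v i) (axis q 1) * lam i * v i $ p\<bar> \<le> (norm (v i) * K) * 1 * norm (v i)"
        unfolding abs_mult by (intro mult_mono) auto
      also have "\<dots> = K * (norm (v i))^2" by (simp add: power2_eq_square)
      also have "\<dots> \<le> K * (1 / c)" using nv K(1) by (intro mult_left_mono) auto
      finally show "\<bar>Q (v i) (axis q 1) * lam i * v i $ p\<bar> \<le> K / c" by simp
    qed
    also have "\<dots> = B" unfolding B_def by simp
    finally show ?thesis .
  qed
  show ?thesis unfolding bounded_iff
    by (rule exI[of _ "real CARD('n) * (real CARD('n) * B)"]) (auto intro: norm_mat_le entry)
qed

end

theorem lemma4p1:
  fixes br :: "real^'n \<Rightarrow> real^'n \<Rightarrow> real^'n"
    and Q :: "real^'n \<Rightarrow> real^'n \<Rightarrow> real"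
  assumes "lie_algebra br"
    and "invariant_inner_product Q br"
  shows "compact (F_plus Q br) \<and> semialgebraic (F_plus Q br)"
proof -
  have bilbr: "bilinear br" using assms(1) unfolding lie_algebra_def by blast
  interpret F: fl Q br
    using assms(2) bilbr unfolding invariant_inner_product_def by unfold_locales auto
  have "symmetric_op Q (mat 1)" unfolding symmetric_op_def by (simp add: matrix_vector_mul_lid)
  then obtain u where u: "F.ON u" using F.spectral by blast
  obtain e where e: "bij_betw e (UNIV::('n \<times> 'n \<times> 'n) set) {0..<CARD('n \<times> 'n \<times> 'n)}"
    using ex_bij_betw_finite_nat[of "UNIV::('n \<times> 'n \<times> 'n) set"] by auto
  define p1 where "p1 p q = (\<lambda>A::real^'n^'n. Q (A *v axis p 1) (axis q 1))" for p q
  define p2 where "p2 p q = (\<lambda>A::real^'n^'n. Q (axis p 1) (A *v axis q 1))" for p q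
  define S1 where "S1 = (\<Inter>p\<in>UNIV. \<Inter>q\<in>UNIV. {A. p1 p q A = p2 p q A})"
  define S2 where "S2 = {A. \<forall>c::real^'n. 0 \<le> (\<Sum>a\<in>UNIV. \<Sum>b\<in>UNIV. c$a * c$b * p1 a b A)}"
  define S3 where "S3 = {A. \<forall>c::real^('n \<times> 'n \<times> 'n). 0 \<le> (\<Sum>a\<in>UNIV. \<Sum>b\<in>UNIV. c$a * c$b * F.W A (e a + e b + 1) u u u)}"
  define S4 where "S4 = {A::real^'n^'n. trace A = 1}"
  have pp1: "poly_fun (p1 p q)" for p q
    unfolding p1_def by (rule pf_bil[OF F.bil pvec_mv[OF pvec_const] pvec_const])
  have pp2: "poly_fun (p2 p q)" for p q
    unfolding p2_def by (rule pf_bil[OF F.bil pvec_const pvec_mv[OF pvec_const]])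
  have ptr: "poly_fun (\<lambda>A::real^'n^'n. trace A)"
    unfolding trace_def by (intro poly_fun_sum poly_fun_entry) simp
  have pW: "poly_fun (\<lambda>A. F.W A (e a + e b + 1) u u u)" for a b by (rule F.W_poly)
  have eq: "F_plus Q br = S1 \<inter> S2 \<inter> S3 \<inter> S4"
  proof (rule set_eqI)
    fix A :: "real^'n^'n"
    show "A \<in> F_plus Q br \<longleftrightarrow> A \<in> S1 \<inter> S2 \<inter> S3 \<inter> S4"
    proof (cases "symmetric_op Q A")
      case True
      have "A \<in> S1" using True unfolding S1_def p1_def p2_def F.sym_iff by blast
      moreover have "nonneg_spectrum A \<longleftrightarrow> A \<in> S2" unfolding S2_def p1_def using F.psd_iff[OF True] by simp
      moreover have "filtering Q br A \<longleftrightarrow> A \<in> S3" unfolding S3_def using F.hk_iff[OF True u e] by simp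
      ultimately show ?thesis unfolding F_plus_def S4_def by blast
    next
      case False
      then have "A \<notin> S1" unfolding S1_def p1_def p2_def F.sym_iff by blast
      moreover have "A \<notin> F_plus Q br" using False unfolding F_plus_def filtering_def by blast
      ultimately show ?thesis by blast
    qed
  qed
  have sa: "semialgebraic (S1 \<inter> S2 \<inter> S3 \<inter> S4)"
  proof (intro sa_inter)
    show "semialgebraic S1" unfolding S1_def by (intro sa_Inter sa_eq pp1 pp2) simp_all
    show "semialgebraic S2" unfolding S2_def by (rule psd_sa[OF pp1])
    show "semialgebraic S3" unfolding S3_def by (rule psd_sa[OF pW])
    show "semialgebraic S4" unfolding S4_def by (rule sa_eq[OF ptr poly_const])
  qed
  have cl: "closed (S1 \<inter> S2 \<inter> S3 \<inter> S4)"
  proof (intro closed_Int)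
    show "closed S1" unfolding S1_def by (intro closed_INT ballI closed_poly_eq pp1 pp2)
    show "closed S2" unfolding S2_def by (rule psd_set_closed[OF pp1])
    show "closed S3" unfolding S3_def by (rule psd_set_closed[OF pW])
    show "closed S4" unfolding S4_def by (rule closed_poly_eq[OF ptr poly_const])
  qed
  have "F_plus Q br \<subseteq> {A. symmetric_op Q A \<and> nonneg_spectrum A \<and> trace A = 1}"
    unfolding F_plus_def filtering_def by blast
  then have bd: "bounded (F_plus Q br)" using F.bounded_F bounded_subset by blast
  show ?thesis using eq sa cl bd by (simp add: compact_eq_bounded_closed)
qed


end
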